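(* Let $\Gamma(\mathbf z)=\sum_{\mathbf i\in\mathbb N^d} f_{\mathbf i}\mathbf z^{\mathbf i}$ be a power series with nonnegative coefficients whose domain of absolute convergence has nonempty interior $\mathscr D\subset\mathbb C^d$. Let $\nu=\nu_\Gamma$ be the measure on $\mathbb R^d$ given by $\nu(S)=\sum_{\mathbf i\in S\cap\mathbb N^d} f_{\mathbf i}$. Assume that $\Gamma$ satisfies the concave growth condition (CG): there exist $a,b,c>0$ such that for all $\mathbf x,\mathbf y\in\mathbb R^d$, $$\nu(B_{\mathbf x+\mathbf y}(a))\ \ge\ c\,\nu(B_{\mathbf x}(b))\,\nu(B_{\mathbf y}(b)),$$ and assume $\tau_\nu:=\sup_{\|\mathbf x\|=1}\psi_\Gamma(\mathbf x)<\infty$. Let $\Omega=\mathrm{Relog}(\mathscr D\cap\mathbb C_*^d)$ and let $\overline\Omega$ be its closure in $\mathbb R^d$. Then $-\psi_\Gamma$ is the support function of $\overline\Omega$, i.e. $-\psi_\Gamma(\mathbf x)=\sup_{\theta\in\overline\Omega}\langle\mathbf x,\theta\rangle$ for all $\mathbf x\in\mathbb R^d$, and for $\mathbf x\in\mathbb R^d_{\ge0}$ $$\psi_\Gamma(\mathbf x)=\inf_{\theta\in-\overline\Omega}\langle\mathbf x,\theta\rangle,$$ and, if $\Omega\ne\mathbb R^d$, $$\psi_\Gamma(\mathbf x)=\inf_{\theta\in-\partial\overline\Omega}\langle\mathbf x,\theta\rangle .$$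
   Context: $\|\cdot\|$ is the $\ell^1$ norm on $\mathbb R^d$ and $B_{\mathbf x}(a)$ is the closed/open ball of radius $a$ centered at $\mathbf x$ for this norm. $\mathbb C_*=\mathbb C\setminus\{0\}$ and $\mathrm{Relog}:\mathbb C_*^d\to\mathbb R^d$, $\mathrm{Relog}(\mathbf z)=(\log|z_1|,\dots,\log|z_d|)$. $\langle\cdot,\cdot\rangle$ is the standard inner product. The indicatrice of growth $\psi_\Gamma:\mathbb R^d\to\mathbb R\cup\{-\infty\}$ is defined by: for an open cone $C\subset\mathbb R^d$, $\tau_C=\limsup_{R\to\infty}\frac1R\log\Big(\sum_{\mathbf i\in C\cap\mathbb N^d,\ R\le\|\mathbf i\|\le R+1} f_{\mathbf i}\Big)$ (with $\log 0=-\infty$), and for $\mathbf x\ne0$, $\psi_\Gamma(\mathbf x)=\|\mathbf x\|\inf_{C\ni\mathbf x}\tau_C$, the infimum over open cones containing $\mathbf x$; $\psi_\Gamma(\mathbf 0)=0$. *)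

theory Defs
  imports "HOL-Analysis.Analysis"
begin

definition l1norm :: "real^'d \<Rightarrow> real" where
  "l1norm x = (\<Sum>k\<in>UNIV. \<bar>x $ k\<bar>)"

definition idx_vec :: "('d \<Rightarrow> nat) \<Rightarrow> real^'d" where
  "idx_vec i = (\<chi> k. real (i k))"

definition nu_ball :: "(('d::finite \<Rightarrow> nat) \<Rightarrow> real) \<Rightarrow> real^'d \<Rightarrow> real \<Rightarrow> real" where
  "nu_ball f x a = (\<Sum>i\<in>{i. l1norm (idx_vec i - x) \<le> a}. f i)"

definition elog :: "real \<Rightarrow> ereal" where
  "elog t = (if t = 0 then -\<infinity> else ereal (ln t))"

definition open_cone :: "(real^'d) set \<Rightarrow> bool" where
  "open_cone C \<longleftrightarrow> open C \<and> (\<forall>x\<in>C. \<forall>t>0. t *\<^sub>R x \<in> C)"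

definition tau_cone :: "(('d::finite \<Rightarrow> nat) \<Rightarrow> real) \<Rightarrow> (real^'d) set \<Rightarrow> ereal" where
  "tau_cone f C = Limsup at_top (\<lambda>R::real.
      ereal (1 / R) * elog (\<Sum>i\<in>{i. idx_vec i \<in> C \<and> R \<le> l1norm (idx_vec i)
                                    \<and> l1norm (idx_vec i) \<le> R + 1}. f i))"

definition psi :: "(('d::finite \<Rightarrow> nat) \<Rightarrow> real) \<Rightarrow> real^'d \<Rightarrow> ereal" where
  "psi f x = (if x = 0 then 0
     else ereal (l1norm x) * (INF C\<in>{C. open_cone C \<and> x \<in> C}. tau_cone f C))"

definition abs_conv_domain :: "(('d::finite \<Rightarrow> nat) \<Rightarrow> real) \<Rightarrow> (complex^'d) set" where
  "abs_conv_domain f = {z. (\<lambda>i. f i * (\<Prod>k\<in>UNIV. norm (z $ k) ^ i k)) summable_on UNIV}"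

definition Relog :: "complex^'d \<Rightarrow> real^'d" where
  "Relog z = (\<chi> k. ln (norm (z $ k)))"

definition Omega :: "(('d::finite \<Rightarrow> nat) \<Rightarrow> real) \<Rightarrow> (real^'d) set" where
  "Omega f = Relog ` (interior (abs_conv_domain f) \<inter> {z. \<forall>k. z $ k \<noteq> 0})"

end

theory Submission
  imports Defs "HOL-Real_Asymp.Real_Asymp"
begin


lemma l1norm_nonneg: "l1norm x \<ge> 0"
  unfolding l1norm_def by (simp add: sum_nonneg)

lemma l1norm_scale: "l1norm (t *\<^sub>R x) = \<bar>t\<bar> * l1norm x"
  unfolding l1norm_def by (simp add: sum_distrib_left abs_mult)

lemma l1norm_zero_iff: "l1norm x = 0 \<longleftrightarrow> x = 0"
  unfolding l1norm_def by (simp add: sum_nonneg_eq_0_iff vec_eq_iff)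

lemma l1norm_pos: "x \<noteq> 0 \<Longrightarrow> l1norm x > 0"
  using l1norm_nonneg[of x] l1norm_zero_iff[of x] by linarith

lemma l1norm_triangle: "l1norm (x + y) \<le> l1norm x + l1norm y"
  unfolding l1norm_def by (simp add: sum.distrib[symmetric] sum_mono abs_triangle_ineq)

lemma l1norm_minus: "l1norm (- x) = l1norm x"
  unfolding l1norm_def by simp

lemma l1norm_diff_commute: "l1norm (x - y) = l1norm (y - x)"
  using l1norm_minus[of "x - y"] by simp

lemma l1norm_diff_ge: "l1norm x - l1norm y \<le> l1norm (x - y)"
  using l1norm_triangle[of "x - y" y] by simp

lemma norm_le_l1norm: "norm x \<le> l1norm x"
  unfolding l1norm_def by (rule norm_le_l1_cart)

lemma comp_le_l1norm: "\<bar>x $ k\<bar> \<le> l1norm x"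
  unfolding l1norm_def by (rule member_le_sum) auto

lemma continuous_l1norm: "continuous_on UNIV l1norm"
  unfolding l1norm_def by (intro continuous_intros)

lemma isCont_l1norm: "isCont l1norm x"
  by (metis continuous_l1norm continuous_on_eq_continuous_at open_UNIV UNIV_I)

lemma idx_vec_add: "idx_vec (\<lambda>k. i k + j k) = idx_vec i + idx_vec j"
  unfolding idx_vec_def by (simp add: vec_eq_iff)

lemma idx_vec_comp: "idx_vec i $ k = real (i k)"
  unfolding idx_vec_def by simp

lemma l1norm_idx: "l1norm (idx_vec i) = (\<Sum>k\<in>UNIV. real (i k))"
  unfolding l1norm_def idx_vec_def by simp

lemma box_finite_card:
  "finite {i::'d::finite\<Rightarrow>nat. \<forall>k. i k \<le> B} \<and> card {i::'d\<Rightarrow>nat. \<forall>k. i k \<le> B} = (B+1)^CARD('d)"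
proof -
  have e: "{i::'d\<Rightarrow>nat. \<forall>k. i k \<le> B} = PiE UNIV (\<lambda>_. {..B})"
    by (auto simp: PiE_UNIV_domain)
  show ?thesis unfolding e by (simp add: card_PiE finite_PiE)
qed

lemma ball_card:
  fixes x :: "real^'d::finite"
  assumes a: "a \<ge> 0"
  shows "finite {j::'d\<Rightarrow>nat. l1norm (idx_vec j - x) \<le> a}
    \<and> card {j::'d\<Rightarrow>nat. l1norm (idx_vec j - x) \<le> a} \<le> (nat \<lfloor>2*a\<rfloor> + 1)^CARD('d)"
proof -
  let ?A = "{j::'d\<Rightarrow>nat. l1norm (idx_vec j - x) \<le> a}"
  let ?B = "{i::'d\<Rightarrow>nat. \<forall>k. i k \<le> nat \<lfloor>2*a\<rfloor>}"
  define h where "h j = (\<lambda>k. nat (int (j k) - \<lceil>x$k - a\<rceil>))" for j :: "'d \<Rightarrow> nat"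
  have comp: "\<bar>real (j k) - x$k\<bar> \<le> a" if "j \<in> ?A" for j k
  proof -
    have "\<bar>(idx_vec j - x)$k\<bar> \<le> l1norm (idx_vec j - x)" by (rule comp_le_l1norm)
    then show ?thesis using that by (simp add: idx_vec_comp)
  qed
  have ge: "int (j k) \<ge> \<lceil>x$k - a\<rceil>" if "j \<in> ?A" for j k
    using comp[OF that, of k] by (simp add: ceiling_le_iff)
  have le: "int (j k) - \<lceil>x$k - a\<rceil> \<le> \<lfloor>2*a\<rfloor>" if "j \<in> ?A" for j k
  proof -
    have "real (j k) \<le> x$k + a" using comp[OF that, of k] by linarith
    moreover have "x$k - a \<le> real_of_int \<lceil>x$k - a\<rceil>" by (rule le_of_int_ceiling)
    ultimately have "real (j k) - real_of_int \<lceil>x$k - a\<rceil> \<le> 2*a" by linarith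
    then have "real_of_int (int (j k) - \<lceil>x$k - a\<rceil>) \<le> 2*a" by simp
    then show ?thesis by linarith
  qed
  have inj: "inj_on h ?A"
  proof (rule inj_onI)
    fix j j' assume j: "j \<in> ?A" and j': "j' \<in> ?A" and "h j = h j'"
    then have nateq: "nat (int (j k) - \<lceil>x$k - a\<rceil>) = nat (int (j' k) - \<lceil>x$k - a\<rceil>)" for k
      unfolding h_def by metis
    then have "int (j k) - \<lceil>x$k - a\<rceil> = int (j' k) - \<lceil>x$k - a\<rceil>" for k
    proof -
      have "0 \<le> int (j k) - \<lceil>x$k - a\<rceil>" "0 \<le> int (j' k) - \<lceil>x$k - a\<rceil>"
        using ge[OF j, of k] ge[OF j', of k] by auto
      then show ?thesis using eq_nat_nat_iff nateq[of k] by blast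
    qed
    then show "j = j'" by (auto simp: fun_eq_iff)
  qed
  have sub: "h ` ?A \<subseteq> ?B"
    using le a unfolding h_def by (auto simp: nat_le_iff)
  have fB: "finite ?B" "card ?B = (nat \<lfloor>2*a\<rfloor> + 1)^CARD('d)" using box_finite_card by blast+
  have fA: "finite ?A" using inj sub fB(1) by (meson finite_imageD finite_subset)
  moreover have "card ?A \<le> card ?B" using card_inj_on_le[OF inj sub fB(1)] .
  ultimately show ?thesis using fB(2) by simp
qed




lemma open_cone_scale: "open_cone C \<Longrightarrow> t > 0 \<Longrightarrow> (t *\<^sub>R x \<in> C) = (x \<in> C)"
proof
  assume C: "open_cone C" and t: "t > 0" and "t *\<^sub>R x \<in> C"
  then have "\<forall>y\<in>C. \<forall>s>0. s *\<^sub>R y \<in> C" unfolding open_cone_def by auto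
  then have "(1/t) *\<^sub>R (t *\<^sub>R x) \<in> C" using \<open>t *\<^sub>R x \<in> C\<close> t by (metis zero_less_divide_1_iff)
  then show "x \<in> C" using t by simp
qed (auto simp: open_cone_def)

lemma open_cone_Int: "open_cone A \<Longrightarrow> open_cone B \<Longrightarrow> open_cone (A \<inter> B)"
  unfolding open_cone_def by auto

definition ncone :: "real^'d::finite \<Rightarrow> real \<Rightarrow> (real^'d) set" where
  "ncone x \<delta> = {v. \<exists>t>0. l1norm (v - t *\<^sub>R x) < \<delta> * t}"

lemma ncone_open_cone: "open_cone (ncone x \<delta>)"
proof -
  have "ncone x \<delta> = (\<Union>t\<in>{0<..}. {v. l1norm (v - t *\<^sub>R x) < \<delta> * t})"
    unfolding ncone_def by auto
  moreover have "open {v. l1norm (v - t *\<^sub>R x) < \<delta> * t}" for t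
  proof (rule open_Collect_less)
    show "continuous_on UNIV (\<lambda>v. l1norm (v - t *\<^sub>R x))"
      by (rule continuous_on_compose2[OF continuous_l1norm]) (auto intro!: continuous_intros)
  qed (auto intro: continuous_intros)
  ultimately have "open (ncone x \<delta>)" by auto
  moreover have "s *\<^sub>R v \<in> ncone x \<delta>" if vs: "v \<in> ncone x \<delta>" "s > 0" for v s
  proof -
    obtain t where t: "t > 0" "l1norm (v - t *\<^sub>R x) < \<delta> * t" using vs unfolding ncone_def by auto
    have "l1norm (s *\<^sub>R v - (s*t) *\<^sub>R x) = s * l1norm (v - t *\<^sub>R x)"
      using l1norm_scale[of s "v - t *\<^sub>R x"] that(2) by (simp add: algebra_simps)
    also have "\<dots> < \<delta> * (s*t)" using t that(2) by simp
    finally show ?thesis unfolding ncone_def using t that(2) by (intro CollectI exI[of _ "s*t"]) auto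
  qed
  ultimately show ?thesis unfolding open_cone_def by auto
qed

lemma ncone_mem: "\<delta> > 0 \<Longrightarrow> x \<in> ncone x \<delta>"
  unfolding ncone_def by (auto intro!: exI[of _ 1] simp: l1norm_def)

lemma open_l1ball:
  assumes "open C" "x \<in> C"
  obtains \<rho> where "\<rho> > 0" "\<And>v. l1norm (v - x) < \<rho> \<Longrightarrow> v \<in> C"
proof -
  obtain \<rho> where "\<rho> > 0" "ball x \<rho> \<subseteq> C" using assms open_contains_ball by blast
  moreover have "v \<in> ball x \<rho>" if "l1norm (v - x) < \<rho>" for v
    using norm_le_l1norm[of "v - x"] that by (simp add: dist_norm norm_minus_commute)
  ultimately show ?thesis using that by blast
qed

lemma psi_homog:
  assumes t: "t > 0"
  shows "psi f (t *\<^sub>R x) = ereal t * psi f x"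
proof (cases "x = 0")
  case True then show ?thesis by (simp add: psi_def)
next
  case False
  then have tx: "t *\<^sub>R x \<noteq> 0" using t by simp
  have S: "{C. open_cone C \<and> t *\<^sub>R x \<in> C} = {C. open_cone C \<and> x \<in> C}"
    using open_cone_scale[OF _ t] by auto
  have e: "ereal (t * l1norm x) = ereal t * ereal (l1norm x)" by simp
  show ?thesis using False tx t unfolding psi_def S
    by (simp add: l1norm_scale e mult.assoc del: times_ereal.simps)
qed

lemma elog_mono: "0 \<le> s \<Longrightarrow> s \<le> s' \<Longrightarrow> elog s \<le> elog s'"
  unfolding elog_def by auto

lemma elog_ge: "s > 0 \<Longrightarrow> elog s = ereal (ln s)"
  unfolding elog_def by auto

definition annulus :: "(real^'d::finite) set \<Rightarrow> real \<Rightarrow> ('d \<Rightarrow> nat) set" where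
  "annulus C R = {i. idx_vec i \<in> C \<and> R \<le> l1norm (idx_vec i) \<and> l1norm (idx_vec i) \<le> R + 1}"

lemma annulus_finite: fixes C :: "(real^'d::finite) set" shows "finite (annulus C R)"
proof -
  have "annulus C R \<subseteq> {j. l1norm (idx_vec j - 0) \<le> \<bar>R\<bar> + 1}" unfolding annulus_def by auto
  moreover have "finite {j::'d\<Rightarrow>nat. l1norm (idx_vec j - 0) \<le> \<bar>R\<bar> + 1}"
    using ball_card[of "\<bar>R\<bar> + 1" "0::real^'d"] by simp
  ultimately show ?thesis using finite_subset by blast
qed

lemma tau_cone_annulus: "tau_cone f C = Limsup at_top (\<lambda>R::real. ereal (1/R) * elog (sum f (annulus C R)))"
  unfolding tau_cone_def annulus_def by simp

lemma tau_mono: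
  assumes nonneg: "\<And>i. f i \<ge> 0" and sub: "C \<subseteq> C'"
  shows "tau_cone f C \<le> tau_cone f C'"
  unfolding tau_cone_annulus
proof (rule Limsup_mono)
  show "\<forall>\<^sub>F R in at_top. ereal (1/R) * elog (sum f (annulus C R)) \<le> ereal (1/R) * elog (sum f (annulus C' R))"
  proof (rule eventually_mono[OF eventually_gt_at_top[of 0]])
    fix R :: real assume R: "R > 0"
    have "annulus C R \<subseteq> annulus C' R" using sub unfolding annulus_def by auto
    then have "sum f (annulus C R) \<le> sum f (annulus C' R)"
      by (intro sum_mono2 annulus_finite) (auto simp: nonneg)
    then have "elog (sum f (annulus C R)) \<le> elog (sum f (annulus C' R))"
      by (intro elog_mono) (auto intro: sum_nonneg nonneg)
    then show "ereal (1/R) * elog (sum f (annulus C R)) \<le> ereal (1/R) * elog (sum f (annulus C' R))"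
      using R by (intro ereal_mult_left_mono) auto
  qed
qed

lemma psi_le_tau:
  assumes "x \<noteq> 0" "open_cone C" "x \<in> C"
  shows "psi f x \<le> ereal (l1norm x) * tau_cone f C"
  using assms unfolding psi_def
  by (auto intro!: ereal_mult_left_mono INF_lower l1norm_nonneg)

lemma psi_ge_real:
  assumes "x \<noteq> 0" "\<And>C. open_cone C \<Longrightarrow> x \<in> C \<Longrightarrow> tau_cone f C \<ge> ereal \<beta>"
  shows "psi f x \<ge> ereal (l1norm x * \<beta>)"
proof -
  have "(INF C\<in>{C. open_cone C \<and> x \<in> C}. tau_cone f C) \<ge> ereal \<beta>"
    using assms(2) by (auto intro!: INF_greatest)
  then have "ereal (l1norm x) * ereal \<beta> \<le> ereal (l1norm x) * (INF C\<in>{C. open_cone C \<and> x \<in> C}. tau_cone f C)"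
    by (intro ereal_mult_left_mono) (auto simp: l1norm_nonneg)
  then show ?thesis using assms(1) unfolding psi_def by simp
qed

lemma psi_lessE:
  assumes x: "x \<noteq> 0" and lt: "psi f x < ereal r"
  obtains C where "open_cone C" "x \<in> C" "ereal (l1norm x) * tau_cone f C < ereal r"
proof -
  let ?I = "INF C\<in>{C. open_cone C \<and> x \<in> C}. tau_cone f C"
  have n: "l1norm x > 0" using l1norm_pos[OF x] .
  have "?I < ereal (r / l1norm x)"
  proof (cases ?I)
    case (real u)
    then have "l1norm x * u < r" using lt x unfolding psi_def by simp
    then have "u < r / l1norm x" using n by (simp add: field_simps)
    then show ?thesis using real by simp
  next
    case PInf then show ?thesis using lt x n unfolding psi_def by simp
  qed simp
  then obtain C where C: "open_cone C" "x \<in> C" "tau_cone f C < ereal (r / l1norm x)"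
    by (auto simp: INF_less_iff)
  have "ereal (l1norm x) * tau_cone f C < ereal r"
  proof (cases "tau_cone f C")
    case (real u)
    then have "u < r / l1norm x" using C by simp
    then have "l1norm x * u < r" using n by (simp add: field_simps)
    then show ?thesis using real by simp
  qed (use C n in auto)
  then show ?thesis using that C by blast
qed




lemma unit_scale:
  fixes x :: "real^'d::finite"
  assumes "x \<noteq> 0"
  shows "l1norm ((1 / l1norm x) *\<^sub>R x) = 1" "x = l1norm x *\<^sub>R ((1 / l1norm x) *\<^sub>R x)"
  using l1norm_pos[OF assms] by (auto simp: l1norm_scale)

lemma psi_bound:
  fixes f :: "('d::finite \<Rightarrow> nat) \<Rightarrow> real"
  assumes tau_fin: "(SUP x\<in>{x :: real^'d. l1norm x = 1}. psi f x) < \<infinity>"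
  obtains B where "B \<ge> 0" "\<And>x. psi f x \<le> ereal (B * l1norm x)"
proof -
  let ?S = "SUP x\<in>{x :: real^'d. l1norm x = 1}. psi f x"
  obtain B where B: "?S \<le> ereal B" "B \<ge> 0"
  proof (cases ?S)
    case (real r) then show ?thesis using that[of "max r 0"] by auto
  next
    case MInf then show ?thesis using that[of 0] by auto
  qed (use tau_fin in auto)
  have "psi f x \<le> ereal (B * l1norm x)" for x
  proof (cases "x = 0")
    case True then show ?thesis by (simp add: psi_def l1norm_def)
  next
    case False
    let ?u = "(1 / l1norm x) *\<^sub>R x"
    have n: "l1norm x > 0" using l1norm_pos[OF False] .
    have "psi f ?u \<le> ?S" using unit_scale[OF False] by (auto intro!: SUP_upper)
    then have u: "psi f ?u \<le> ereal B" using B by simp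
    have "psi f x = ereal (l1norm x) * psi f ?u"
      using psi_homog[OF n, of f ?u] unit_scale(2)[OF False] by simp
    also have "\<dots> \<le> ereal (l1norm x) * ereal B" using u n by (intro ereal_mult_left_mono) auto
    finally show ?thesis by (simp add: mult.commute)
  qed
  then show ?thesis using that B by blast
qed

lemma psi_usc:
  fixes f :: "('d::finite \<Rightarrow> nat) \<Rightarrow> real"
  assumes tau_fin: "(SUP x\<in>{x :: real^'d. l1norm x = 1}. psi f x) < \<infinity>"
    and lt: "psi f x < ereal r"
  shows "\<exists>U. open U \<and> x \<in> U \<and> (\<forall>y\<in>U. psi f y < ereal r)"
proof (cases "x = 0")
  case True
  obtain B where B: "B \<ge> 0" "\<And>x. psi f x \<le> ereal (B * l1norm x)" using psi_bound[OF tau_fin] by blast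
  have r: "r > 0" using lt True by (simp add: psi_def)
  let ?U = "{y. B * l1norm y < r}"
  have "open ?U" by (rule open_Collect_less) (auto intro!: continuous_intros continuous_on_compose2[OF continuous_l1norm])
  moreover have "x \<in> ?U" using True r by (simp add: l1norm_def)
  moreover have "psi f y < ereal r" if "y \<in> ?U" for y 
  proof -
    have "ereal (B * l1norm y) < ereal r" using that by simp
    then show ?thesis using B(2)[of y] by (rule le_less_trans[rotated])
  qed
  ultimately show ?thesis by blast
next
  case False
  obtain C where C: "open_cone C" "x \<in> C" "ereal (l1norm x) * tau_cone f C < ereal r"
    using psi_lessE[OF False lt] by blast
  have oC: "open C" using C(1) unfolding open_cone_def by auto
  have o0: "open (- {0::real^'d})" by auto
  show ?thesis
  proof (cases "tau_cone f C")
    case MInf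
    let ?U = "C \<inter> - {0}"
    have "open ?U" using oC o0 by auto
    moreover have "x \<in> ?U" using C False by auto
    moreover have "psi f y < ereal r" if "y \<in> ?U" for y
    proof -
      have "psi f y \<le> ereal (l1norm y) * tau_cone f C" using that C(1) by (intro psi_le_tau) auto
      also have "\<dots> = - \<infinity>" using MInf l1norm_pos[of y] that by auto
      finally show ?thesis by simp
    qed
    ultimately show ?thesis by blast
  next
    case (real u)
    let ?U = "C \<inter> - {0} \<inter> {y. l1norm y * u < r}"
    have "open {y. l1norm y * u < r}" by (rule open_Collect_less) (auto intro!: continuous_intros continuous_on_compose2[OF continuous_l1norm])
    then have "open ?U" using oC o0 by auto
    moreover have "x \<in> ?U" using C False real by auto
    moreover have "psi f y < ereal r" if "y \<in> ?U" for y
    proof -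
      have "psi f y \<le> ereal (l1norm y) * tau_cone f C" using that C(1) by (intro psi_le_tau) auto
      also have "\<dots> < ereal r" using real that by auto
      finally show ?thesis .
    qed
    ultimately show ?thesis by blast
  next
    case PInf
    then show ?thesis using C(3) l1norm_pos[OF False] by simp
  qed
qed

definition hypo :: "(('d::finite \<Rightarrow> nat) \<Rightarrow> real) \<Rightarrow> ((real^'d) \<times> real) set" where
  "hypo f = {p. ereal (snd p) \<le> psi f (fst p)}"

lemma hypo_closed:
  fixes f :: "('d::finite \<Rightarrow> nat) \<Rightarrow> real"
  assumes tau_fin: "(SUP x\<in>{x :: real^'d. l1norm x = 1}. psi f x) < \<infinity>"
  shows "closed (hypo f)"
proof -
  have "open (- hypo f)"
  proof (rule open_prod_intro)
    fix p assume "p \<in> - hypo f"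
    then obtain y s where p: "p = (y, s)" "psi f y < ereal s" unfolding hypo_def by (cases p) auto
    obtain r where r: "psi f y < ereal r" "r < s"
    proof (cases "psi f y")
      case (real v) then show ?thesis using that[of "(v + s)/2"] p by auto
    next
      case MInf then show ?thesis using that[of "s - 1"] by auto
    qed (use p in auto)
    obtain U where U: "open U" "y \<in> U" "\<forall>z\<in>U. psi f z < ereal r" using psi_usc[OF tau_fin r(1)] by blast
    have "U \<times> {r<..} \<subseteq> - hypo f" using U unfolding hypo_def
      by auto (meson ereal_less_eq(3) less_imp_le order.strict_trans1 not_le)
    then show "\<exists>A B. open A \<and> open B \<and> p \<in> A \<times> B \<and> A \<times> B \<subseteq> - hypo f"
      using U r p by (intro exI[of _ U] exI[of _ "{r<..}"]) auto
  qed
  then show ?thesis by (simp add: closed_def)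
qed




lemma nu_ball_ge_point:
  fixes f :: "('d::finite \<Rightarrow> nat) \<Rightarrow> real"
  assumes nonneg: "\<And>i. f i \<ge> 0" and b: "b \<ge> 0"
  shows "nu_ball f (idx_vec p) b \<ge> f p"
proof -
  have fin: "finite {i. l1norm (idx_vec i - idx_vec p) \<le> b}" using ball_card[OF b, of "idx_vec p"] by simp
  have "p \<in> {i. l1norm (idx_vec i - idx_vec p) \<le> b}" using b by (simp add: l1norm_def)
  then show ?thesis unfolding nu_ball_def using fin by (intro member_le_sum) (auto simp: nonneg)
qed

lemma CG_point:
  fixes f :: "('d::finite \<Rightarrow> nat) \<Rightarrow> real"
  assumes nonneg: "\<And>i. f i \<ge> 0"
    and CG: "\<exists>a>0. \<exists>b>0. \<exists>c>0. \<forall>x y :: real^'d.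
               nu_ball f (x + y) a \<ge> c * nu_ball f x b * nu_ball f y b"
  shows "\<exists>a>0. \<exists>\<kappa>>0. \<kappa> \<le> 1 \<and> (\<forall>p q. \<exists>j. l1norm (idx_vec j - (idx_vec p + idx_vec q)) \<le> a \<and> f j \<ge> \<kappa> * f p * f q)"
proof -
  obtain a b c where abc: "a > 0" "b > 0" "c > 0" and cg: "\<And>x y :: real^'d. nu_ball f (x + y) a \<ge> c * nu_ball f x b * nu_ball f y b"
    using CG by blast
  define K where "K = (nat \<lfloor>2*a\<rfloor> + 1)^CARD('d)"
  have K1: "K \<ge> 1" unfolding K_def by simp
  define \<kappa> where "\<kappa> = min 1 (c / real K)"
  have \<kappa>: "\<kappa> > 0" "\<kappa> \<le> 1" "\<kappa> \<le> c / real K" using abc K1 unfolding \<kappa>_def by auto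
  have "\<exists>j. l1norm (idx_vec j - (idx_vec p + idx_vec q)) \<le> a \<and> f j \<ge> \<kappa> * f p * f q" for p q
  proof -
    let ?w = "idx_vec p + idx_vec q"
    let ?A = "{j. l1norm (idx_vec j - ?w) \<le> a}"
    have fA: "finite ?A" and cA: "card ?A \<le> K" using ball_card[of a ?w] abc unfolding K_def by auto
    have pq: "(\<lambda>k. p k + q k) \<in> ?A" using abc by (simp add: idx_vec_add l1norm_def)
    then have ne: "?A \<noteq> {}" by auto
    define m where "m = Max (f ` ?A)"
    have "m \<in> f ` ?A" unfolding m_def using Max_in[of "f ` ?A"] fA ne by blast
    then obtain j where j: "j \<in> ?A" "f j = m" by auto
    have le: "f i \<le> m" if "i \<in> ?A" for i unfolding m_def using fA that by (intro Max_ge) auto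
    have "c * f p * f q \<le> c * nu_ball f (idx_vec p) b * nu_ball f (idx_vec q) b"
    proof -
      have np: "f p \<le> nu_ball f (idx_vec p) b" and nq: "f q \<le> nu_ball f (idx_vec q) b"
        using nu_ball_ge_point[OF nonneg, of b] abc by auto
      have "c * f p \<le> c * nu_ball f (idx_vec p) b" using np abc by simp
      moreover have "0 \<le> c * nu_ball f (idx_vec p) b" using np nonneg[of p] abc by simp
      ultimately show ?thesis using nq nonneg[of q] by (metis mult_mono mult.assoc)
    qed
    also have "\<dots> \<le> nu_ball f ?w a" by (rule cg)
    also have "\<dots> = sum f ?A" unfolding nu_ball_def ..
    also have "\<dots> \<le> real (card ?A) * m" using sum_bounded_above[of ?A f m] le by auto
    also have "\<dots> \<le> real K * m" using cA j le nonneg[of j] by (intro mult_right_mono) auto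
    finally have *: "c * f p * f q \<le> real K * m" .
    have "\<kappa> * f p * f q \<le> (c / real K) * f p * f q" using \<kappa> nonneg by (intro mult_right_mono) auto
    also have "\<dots> \<le> m" using * K1 by (simp add: field_simps)
    finally show ?thesis using j by auto
  qed
  then show ?thesis using abc \<kappa> by blast
qed

lemma ereal_ge_eps:
  assumes "\<And>e. e > 0 \<Longrightarrow> ereal (v - e) \<le> L"
  shows "ereal v \<le> L"
proof (cases L)
  case (real l)
  have "v - e \<le> l" if "e > 0" for e using assms[OF that] real by simp
  then have "v \<le> l"
  proof -
    assume h: "\<And>e. e > 0 \<Longrightarrow> v - e \<le> l"
    show "v \<le> l"
    proof (rule ccontr)
      assume "\<not> v \<le> l"
      then have "(v - l)/2 > 0" by simp
      from h[OF this] \<open>\<not> v \<le> l\<close> show False by (simp add: field_simps)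
    qed
  qed
  then show ?thesis using real by simp
next
  case MInf then show ?thesis using assms[of 1] by simp
qed simp

lemma Limsup_ge_frequently:
  fixes g :: "real \<Rightarrow> ereal"
  assumes "\<And>M. \<exists>R\<ge>M. g R \<ge> w"
  shows "Limsup at_top g \<ge> w"
proof (rule ccontr)
  assume "\<not> ?thesis"
  then have "eventually (\<lambda>R. g R < w) at_top" using Limsup_lessD by (metis not_le)
  then obtain M where "\<And>R. R \<ge> M \<Longrightarrow> g R < w" by (auto simp: eventually_at_top_linorder)
  then show False using assms[of M] by (meson not_le)
qed

lemma Limsup_gt_frequently:
  fixes g :: "real \<Rightarrow> ereal"
  assumes "Limsup at_top g > w"
  shows "\<exists>R\<ge>M. g R > w"
proof (rule ccontr)
  assume "\<not> ?thesis"
  then have "eventually (\<lambda>R. g R \<le> w) at_top" by (auto simp: eventually_at_top_linorder not_less)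
  then have "Limsup at_top g \<le> w" by (rule Limsup_bounded)
  then show False using assms by simp
qed




definition good :: "(('d::finite \<Rightarrow> nat) \<Rightarrow> real) \<Rightarrow> real^'d \<Rightarrow> real \<Rightarrow> bool" where
  "good f x \<alpha> \<longleftrightarrow> (\<forall>\<delta>>0. \<forall>M. \<exists>r T. T \<ge> M \<and> T > 0 \<and> l1norm (idx_vec r - T *\<^sub>R x) \<le> \<delta> * T
      \<and> f r > 0 \<and> ln (f r) \<ge> T * (\<alpha> - \<delta>))"

definition goodall :: "(('d::finite \<Rightarrow> nat) \<Rightarrow> real) \<Rightarrow> real^'d \<Rightarrow> real \<Rightarrow> bool" where
  "goodall f x \<alpha> \<longleftrightarrow> (\<forall>\<delta>>0. \<exists>M. \<forall>T\<ge>M. \<exists>r. l1norm (idx_vec r - T *\<^sub>R x) \<le> \<delta> * T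
      \<and> f r > 0 \<and> ln (f r) \<ge> T * (\<alpha> - \<delta>))"

lemma goodall_good: "goodall f x \<alpha> \<Longrightarrow> good f x \<alpha>"
  unfolding goodall_def good_def
proof (intro allI impI)
  fix \<delta> :: real and M :: real
  assume h: "\<forall>\<delta>>0. \<exists>M. \<forall>T\<ge>M. \<exists>r. l1norm (idx_vec r - T *\<^sub>R x) \<le> \<delta> * T \<and> 0 < f r \<and> T * (\<alpha> - \<delta>) \<le> ln (f r)"
    and d: "\<delta> > 0"
  obtain M' where M': "\<forall>T\<ge>M'. \<exists>r. l1norm (idx_vec r - T *\<^sub>R x) \<le> \<delta> * T \<and> 0 < f r \<and> T * (\<alpha> - \<delta>) \<le> ln (f r)"
    using h d by blast
  let ?T = "max (max M M') 1"
  obtain r where "l1norm (idx_vec r - ?T *\<^sub>R x) \<le> \<delta> * ?T \<and> 0 < f r \<and> ?T * (\<alpha> - \<delta>) \<le> ln (f r)"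
    using M' by (meson max.cobounded1 max.cobounded2 order_trans)
  then show "\<exists>r T. M \<le> T \<and> 0 < T \<and> l1norm (idx_vec r - T *\<^sub>R x) \<le> \<delta> * T \<and> 0 < f r \<and> T * (\<alpha> - \<delta>) \<le> ln (f r)"
    by (intro exI[of _ r] exI[of _ ?T]) auto
qed

lemma good_nonneg:
  assumes "good f x \<alpha>"
  shows "x $ k \<ge> 0"
proof (rule ccontr)
  assume "\<not> x $ k \<ge> 0"
  then have neg: "x $ k < 0" by simp
  define \<delta> where "\<delta> = - x $ k / 2"
  have d: "\<delta> > 0" using neg unfolding \<delta>_def by simp
  obtain r T where rT: "T > 0" "l1norm (idx_vec r - T *\<^sub>R x) \<le> \<delta> * T"
    using assms d unfolding good_def by blast
  have "\<bar>(idx_vec r - T *\<^sub>R x) $ k\<bar> \<le> \<delta> * T" using comp_le_l1norm rT(2) order_trans by blast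
  then have "real (r k) - T * x $ k \<le> \<delta> * T" by (simp add: idx_vec_comp)
  moreover have "T * x $ k < 0" using rT(1) neg by (simp add: mult_pos_neg)
  moreover have "\<delta> * T = - (T * x $ k) / 2" unfolding \<delta>_def by simp
  moreover have "real (r k) \<ge> 0" by simp
  ultimately show False by linarith
qed

lemma ratio_bound:
  fixes R T n \<delta> \<alpha> L :: real
  assumes R: "R > 0" and T: "T > 0" and lo: "T*(n-\<delta>) \<le> R" and hi: "R \<le> T*(n+\<delta>)" and nd: "n - \<delta> > 0"
    and L: "L \<ge> T*(\<alpha>-\<delta>)"
  shows "L / R \<ge> min ((\<alpha>-\<delta>)/(n+\<delta>)) ((\<alpha>-\<delta>)/(n-\<delta>))"
proof -
  have "L / R \<ge> T*(\<alpha>-\<delta>) / R" using L R by (simp add: divide_right_mono)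
  moreover have "T*(\<alpha>-\<delta>) / R \<ge> min ((\<alpha>-\<delta>)/(n+\<delta>)) ((\<alpha>-\<delta>)/(n-\<delta>))"
  proof (cases "\<alpha> - \<delta> \<ge> 0")
    case True
    have "T*(\<alpha>-\<delta>) / (T*(n+\<delta>)) \<le> T*(\<alpha>-\<delta>) / R"
      using True T R hi by (intro divide_left_mono) auto
    moreover have "T*(\<alpha>-\<delta>) / (T*(n+\<delta>)) = (\<alpha>-\<delta>)/(n+\<delta>)" using T by simp
    ultimately show ?thesis by linarith
  next
    case False
    have "T*(\<alpha>-\<delta>) / (T*(n-\<delta>)) \<le> T*(\<alpha>-\<delta>) / R"
    proof (rule divide_left_mono_neg)
      show "T*(\<alpha>-\<delta>) \<le> 0" using False T by (intro mult_nonneg_nonpos) auto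
      show "0 < T*(n-\<delta>) * R" using T nd R by simp
    qed (rule lo)
    moreover have "T*(\<alpha>-\<delta>) / (T*(n-\<delta>)) = (\<alpha>-\<delta>)/(n-\<delta>)" using T by simp
    ultimately show ?thesis by linarith
  qed
  ultimately show ?thesis by linarith
qed

lemma l1norm_scale_diff_bounds:
  assumes "l1norm (v - T *\<^sub>R x) \<le> e" "T > 0"
  shows "l1norm v \<le> T * l1norm x + e" "T * l1norm x - e \<le> l1norm v"
proof -
  have "l1norm v \<le> l1norm (v - T *\<^sub>R x) + l1norm (T *\<^sub>R x)" using l1norm_triangle[of "v - T *\<^sub>R x" "T *\<^sub>R x"] by simp
  then show "l1norm v \<le> T * l1norm x + e" using assms by (simp add: l1norm_scale)
  have "l1norm (T *\<^sub>R x) \<le> l1norm (T *\<^sub>R x - v) + l1norm v" using l1norm_triangle[of "T *\<^sub>R x - v" v] by simp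
  then show "T * l1norm x - e \<le> l1norm v" using assms by (simp add: l1norm_scale l1norm_diff_commute)
qed

lemma good_psi:
  fixes f :: "('d::finite \<Rightarrow> nat) \<Rightarrow> real"
  assumes nonneg: "\<And>i. f i \<ge> 0" and gd: "good f x \<alpha>" and x: "x \<noteq> 0"
  shows "psi f x \<ge> ereal \<alpha>"
proof -
  define n where "n = l1norm x"
  have n: "n > 0" unfolding n_def using l1norm_pos[OF x] .
  have "tau_cone f C \<ge> ereal (\<alpha> / n)" if C: "open_cone C" "x \<in> C" for C
  proof -
    obtain \<rho> where \<rho>: "\<rho> > 0" "\<And>v. l1norm (v - x) < \<rho> \<Longrightarrow> v \<in> C"
      using open_l1ball[of C x] C unfolding open_cone_def by blast
    have "ereal (\<alpha>/n - \<epsilon>) \<le> tau_cone f C" if eps: "\<epsilon> > 0" for \<epsilon>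
    proof -
      have l1: "((\<lambda>\<delta>. (\<alpha>-\<delta>)/(n+\<delta>)) \<longlongrightarrow> (\<alpha>-0)/(n+0)) (at_right 0)"
        using n by (intro tendsto_intros) auto
      have l2: "((\<lambda>\<delta>. (\<alpha>-\<delta>)/(n-\<delta>)) \<longlongrightarrow> (\<alpha>-0)/(n-0)) (at_right 0)"
        using n by (intro tendsto_intros) auto
      have l3: "((\<lambda>\<delta>::real. \<delta>) \<longlongrightarrow> 0) (at_right 0)" by (rule tendsto_ident_at)
      have e1: "eventually (\<lambda>\<delta>. (\<alpha>-\<delta>)/(n+\<delta>) > \<alpha>/n - \<epsilon>) (at_right 0)"
        using eps by (intro order_tendstoD(1)[OF l1]) auto
      have e2: "eventually (\<lambda>\<delta>. (\<alpha>-\<delta>)/(n-\<delta>) > \<alpha>/n - \<epsilon>) (at_right 0)"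
        using eps by (intro order_tendstoD(1)[OF l2]) auto
      have e3: "eventually (\<lambda>\<delta>. \<delta> < \<rho>) (at_right 0)"
        using \<rho> by (intro order_tendstoD(2)[OF l3]) auto
      have e4: "eventually (\<lambda>\<delta>. \<delta> < n/2) (at_right 0)"
        using n by (intro order_tendstoD(2)[OF l3]) auto
      have e5: "eventually (\<lambda>\<delta>::real. \<delta> > 0) (at_right 0)" by (rule eventually_at_right_less)
      have ev: "eventually (\<lambda>\<delta>. (\<alpha>-\<delta>)/(n+\<delta>) > \<alpha>/n - \<epsilon> \<and> (\<alpha>-\<delta>)/(n-\<delta>) > \<alpha>/n - \<epsilon>
          \<and> \<delta> < \<rho> \<and> \<delta> < n/2 \<and> \<delta> > 0) (at_right 0)"
        by (rule eventually_mono[OF eventually_conj[OF e1 eventually_conj[OF e2 eventually_conj[OF e3 eventually_conj[OF e4 e5]]]]]) auto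
      obtain \<delta> where d: "(\<alpha>-\<delta>)/(n+\<delta>) > \<alpha>/n - \<epsilon>" "(\<alpha>-\<delta>)/(n-\<delta>) > \<alpha>/n - \<epsilon>" "\<delta> < \<rho>" "\<delta> < n/2" "\<delta> > 0"
        using eventually_happens'[OF _ ev] by auto
      show ?thesis unfolding tau_cone_annulus
      proof (rule Limsup_ge_frequently)
        fix M :: real
        obtain r T where rT: "T \<ge> 2 * \<bar>M\<bar> / n + 1" "T > 0" "l1norm (idx_vec r - T *\<^sub>R x) \<le> \<delta> * T"
          "f r > 0" "ln (f r) \<ge> T * (\<alpha> - \<delta>)"
          using gd d(5) unfolding good_def by blast
        define R where "R = l1norm (idx_vec r)"
        have Rb: "T * n - \<delta> * T \<le> R" "R \<le> T * n + \<delta> * T"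
          using l1norm_scale_diff_bounds[OF rT(3) rT(2)] unfolding R_def n_def by auto
        have "\<delta> * T \<le> n/2 * T" using d(4) rT(2) by (intro mult_right_mono) auto
        moreover have "n/2 * T = T * n / 2" by simp
        ultimately have "T * n / 2 \<le> R" using Rb by linarith
        moreover have "T * n / 2 \<ge> \<bar>M\<bar> + n/2" using rT(1) n by (simp add: field_simps)
        ultimately have RM: "R \<ge> M" "R > 0" using n by linarith+
        have "(1 / T) *\<^sub>R idx_vec r \<in> C"
        proof (rule \<rho>(2))
          have "l1norm ((1 / T) *\<^sub>R idx_vec r - x) = l1norm ((1/T) *\<^sub>R (idx_vec r - T *\<^sub>R x))"
            using rT(2) by (simp add: algebra_simps)
          also have "\<dots> = (1/T) * l1norm (idx_vec r - T *\<^sub>R x)" using rT(2) by (simp add: l1norm_scale)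
          also have "\<dots> \<le> (1/T) * (\<delta> * T)" using rT(2,3) by (intro mult_left_mono) auto
          also have "\<dots> = \<delta>" using rT(2) by simp
          finally show "l1norm ((1 / T) *\<^sub>R idx_vec r - x) < \<rho>" using d(3) by linarith
        qed
        then have "T *\<^sub>R ((1 / T) *\<^sub>R idx_vec r) \<in> C" using C(1) rT(2) unfolding open_cone_def by blast
        then have rC: "idx_vec r \<in> C" using rT(2) by simp
        have ra: "r \<in> annulus C R" unfolding annulus_def R_def using rC by auto
        have sge: "sum f (annulus C R) \<ge> f r"
          using ra annulus_finite[of C R] by (intro member_le_sum) (auto simp: nonneg)
        then have spos: "sum f (annulus C R) > 0" using rT(4) by linarith
        have "ln (f r) / R \<ge> min ((\<alpha>-\<delta>)/(n+\<delta>)) ((\<alpha>-\<delta>)/(n-\<delta>))"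
        proof (rule ratio_bound[OF RM(2) rT(2) _ _ _ rT(5)])
          show "T * (n - \<delta>) \<le> R" using Rb(1) by (simp add: algebra_simps)
          show "R \<le> T * (n + \<delta>)" using Rb(2) by (simp add: algebra_simps)
          show "n - \<delta> > 0" using d n by linarith
        qed
        then have "ln (f r) / R > \<alpha>/n - \<epsilon>" using d(1,2) by linarith
        moreover have "ln (f r) \<le> ln (sum f (annulus C R))" using sge rT(4) by simp
        moreover have "ln (f r) / R \<le> ln (sum f (annulus C R)) / R"
          using \<open>ln (f r) \<le> ln (sum f (annulus C R))\<close> RM(2) by (intro divide_right_mono) auto
        ultimately have "ln (sum f (annulus C R)) / R \<ge> \<alpha>/n - \<epsilon>" by linarith
        then have "ereal (\<alpha>/n - \<epsilon>) \<le> ereal (1/R) * elog (sum f (annulus C R))"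
          using spos by (simp add: elog_ge)
        then show "\<exists>R\<ge>M. ereal (\<alpha>/n - \<epsilon>) \<le> ereal (1/R) * elog (sum f (annulus C R))"
          using RM by blast
      qed
    qed
    then have "ereal (\<alpha>/n - e) \<le> tau_cone f C" if "e > 0" for e using that by blast
    then show ?thesis by (rule ereal_ge_eps)
  qed
  then have "psi f x \<ge> ereal (l1norm x * (\<alpha> / n))" using psi_ge_real[OF x] by blast
  then show ?thesis using n unfolding n_def by simp
qed




lemma lim_ln_over: "((\<lambda>R::real. ln (2*R+3) / R) \<longlongrightarrow> 0) at_top"
  by real_asymp

lemma lim_inv: "((\<lambda>R::real. 1 / R) \<longlongrightarrow> 0) at_top"
  by real_asymp

lemma exists_large_point:
  fixes f :: "('d::finite \<Rightarrow> nat) \<Rightarrow> real"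
  assumes nonneg: "\<And>i. f i \<ge> 0" and R: "R \<ge> 0" and S: "sum f (annulus C R) > 0"
  obtains r where "r \<in> annulus C R" "ln (f r) \<ge> ln (sum f (annulus C R)) - real CARD('d) * ln (2*R+3)" "f r > 0"
proof -
  let ?A = "annulus C R"
  have fA: "finite ?A" by (rule annulus_finite)
  have ne: "?A \<noteq> {}" using S by auto
  have sub: "?A \<subseteq> {j. l1norm (idx_vec j - 0) \<le> R + 1}" unfolding annulus_def by auto
  have cb: "card {j::'d\<Rightarrow>nat. l1norm (idx_vec j - 0) \<le> R + 1} \<le> (nat \<lfloor>2*(R+1)\<rfloor> + 1)^CARD('d)"
    and fb: "finite {j::'d\<Rightarrow>nat. l1norm (idx_vec j - 0) \<le> R + 1}"
    using ball_card[of "R+1" "0::real^'d"] R by auto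
  have cA: "card ?A \<le> (nat \<lfloor>2*(R+1)\<rfloor> + 1)^CARD('d)" using card_mono[OF fb sub] cb by linarith
  have "real (nat \<lfloor>2*(R+1)\<rfloor> + 1) \<le> 2*R+3"
  proof -
    have "0 \<le> \<lfloor>2*(R+1)\<rfloor>" using R by simp
    then have "real (nat \<lfloor>2*(R+1)\<rfloor>) = real_of_int \<lfloor>2*(R+1)\<rfloor>" by simp
    moreover have "real_of_int \<lfloor>2*(R+1)\<rfloor> \<le> 2*(R+1)" by (rule of_int_floor_le)
    ultimately show ?thesis by simp
  qed
  then have "real ((nat \<lfloor>2*(R+1)\<rfloor> + 1)^CARD('d)) \<le> (2*R+3)^CARD('d)"
    by (simp only: of_nat_power) (intro power_mono, auto)
  then have cAr: "real (card ?A) \<le> (2*R+3)^CARD('d)" using cA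
    by (meson of_nat_le_iff order_trans)
  have c0: "card ?A > 0" using fA ne by (simp add: card_gt_0_iff)
  define m where "m = Max (f ` ?A)"
  have "m \<in> f ` ?A" unfolding m_def using Max_in[of "f ` ?A"] fA ne by blast
  then obtain r where r: "r \<in> ?A" "f r = m" by auto
  have le: "f i \<le> m" if "i \<in> ?A" for i unfolding m_def using fA that by (intro Max_ge) auto
  have "sum f ?A \<le> real (card ?A) * m" using sum_bounded_above[of ?A f m] le by auto
  then have m1: "m \<ge> sum f ?A / real (card ?A)" using c0 by (simp add: field_simps)
  moreover have "sum f ?A / real (card ?A) > 0" using S c0 by simp
  ultimately have mpos: "m > 0" by linarith
  have "ln (sum f ?A / real (card ?A)) \<le> ln m" using m1 S c0 mpos by (subst ln_le_cancel_iff) auto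
  moreover have "ln (sum f ?A / real (card ?A)) = ln (sum f ?A) - ln (real (card ?A))"
    using S c0 by (simp add: ln_div)
  moreover have "ln (real (card ?A)) \<le> ln ((2*R+3)^CARD('d))" using cAr c0 by (subst ln_le_cancel_iff) auto
  moreover have "ln ((2*R+3)^CARD('d)) = real CARD('d) * ln (2*R+3)" using R by (simp add: ln_realpow)
  ultimately have "ln m \<ge> ln (sum f ?A) - real CARD('d) * ln (2*R+3)" by linarith
  then show ?thesis using that r mpos by auto
qed

lemma psi_good:
  fixes f :: "('d::finite \<Rightarrow> nat) \<Rightarrow> real"
  assumes nonneg: "\<And>i. f i \<ge> 0" and x: "x \<noteq> 0" and gt: "psi f x > ereal \<alpha>"
  shows "good f x \<alpha>"
  unfolding good_def
proof (intro allI impI)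
  fix \<delta> M :: real assume d: "\<delta> > 0"
  define n where "n = l1norm x"
  have n: "n > 0" unfolding n_def using l1norm_pos[OF x] .
  define D where "D = real CARD('d)"
  have l3: "((\<lambda>\<delta>::real. \<delta> * \<bar>\<alpha>\<bar> / n) \<longlongrightarrow> 0 * \<bar>\<alpha>\<bar> / n) (at_right 0)"
    by (intro tendsto_intros tendsto_ident_at) (use n in auto)
  have l4: "((\<lambda>\<delta>::real. \<delta>) \<longlongrightarrow> 0) (at_right 0)" by (rule tendsto_ident_at)
  have e1: "eventually (\<lambda>\<delta>1. \<delta>1 * \<bar>\<alpha>\<bar> / n < \<delta>/2) (at_right 0)"
    using d by (intro order_tendstoD(2)[OF l3]) auto
  have e2: "eventually (\<lambda>\<delta>1. \<delta>1 < n/2) (at_right 0)" using n by (intro order_tendstoD(2)[OF l4]) auto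
  have e3: "eventually (\<lambda>\<delta>1::real. \<delta>1 > 0) (at_right 0)" by (rule eventually_at_right_less)
  have e4: "eventually (\<lambda>\<delta>1. \<delta>1 < \<delta>) (at_right 0)" using d by (intro order_tendstoD(2)[OF l4]) auto
  obtain \<delta>1 where d1: "\<delta>1 * \<bar>\<alpha>\<bar> / n < \<delta>/2" "\<delta>1 < n/2" "\<delta>1 > 0" "\<delta>1 < \<delta>"
    using eventually_happens'[OF _ eventually_conj[OF e1 eventually_conj[OF e2 eventually_conj[OF e3 e4]]]] by auto
  let ?C = "ncone x \<delta>1"
  have "psi f x \<le> ereal n * tau_cone f ?C"
    unfolding n_def using psi_le_tau[OF x ncone_open_cone ncone_mem[OF d1(3)]] .
  then have "ereal n * tau_cone f ?C > ereal \<alpha>" using gt by simp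
  then have tau: "tau_cone f ?C > ereal (\<alpha> / n)"
  proof (cases "tau_cone f ?C")
    case (real u)
    then have "n * u > \<alpha>" using \<open>ereal n * tau_cone f ?C > ereal \<alpha>\<close> by simp
    then show ?thesis using real n by (simp add: field_simps)
  qed (use n in auto)
  have lA: "((\<lambda>R. (\<bar>\<alpha>\<bar>/n) * (1/R) + D * (ln (2*R+3) / R)) \<longlongrightarrow> (\<bar>\<alpha>\<bar>/n) * 0 + D * 0) at_top"
    by (intro tendsto_intros lim_inv lim_ln_over)
  have eA: "eventually (\<lambda>R. (\<bar>\<alpha>\<bar>/n) * (1/R) + D * (ln (2*R+3) / R) < \<delta> / (4*n)) at_top"
    using d n by (intro order_tendstoD(2)[OF lA]) auto
  obtain M0 where M0: "\<And>R. R \<ge> M0 \<Longrightarrow> (\<bar>\<alpha>\<bar>/n) * (1/R) + D * (ln (2*R+3) / R) < \<delta> / (4*n)"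
    using eA by (auto simp: eventually_at_top_linorder)
  obtain R where R: "R \<ge> max (max M0 1) (2*n*(\<bar>M\<bar>+1))"
    "ereal (1/R) * elog (sum f (annulus ?C R)) > ereal (\<alpha> / n)"
    using Limsup_gt_frequently[OF tau[unfolded tau_cone_annulus]] by blast
  have R1: "R \<ge> 1" "R \<ge> M0" "R \<ge> 2*n*(\<bar>M\<bar>+1)" using R(1) by auto
  let ?S = "sum f (annulus ?C R)"
  have Spos: "?S > 0"
  proof (rule ccontr)
    assume "\<not> ?S > 0"
    moreover have "?S \<ge> 0" by (intro sum_nonneg) (auto simp: nonneg)
    ultimately have "?S = 0" by simp
    then show False using R(2) R1 by (simp add: elog_def)
  qed
  have "ereal (ln ?S / R) > ereal (\<alpha>/n)" using R(2) Spos by (simp add: elog_ge)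
  then have lnS: "ln ?S > R * \<alpha> / n" using R1 by (simp add: field_simps)
  obtain r where r: "r \<in> annulus ?C R" "ln (f r) \<ge> ln ?S - D * ln (2*R+3)" "f r > 0"
    using exists_large_point[OF nonneg _ Spos] R1 unfolding D_def by auto
  have rn: "R \<le> l1norm (idx_vec r)" "l1norm (idx_vec r) \<le> R + 1" "idx_vec r \<in> ?C"
    using r(1) unfolding annulus_def by auto
  obtain t where t: "t > 0" "l1norm (idx_vec r - t *\<^sub>R x) < \<delta>1 * t"
    using rn(3) unfolding ncone_def by auto
  have tb: "l1norm (idx_vec r) \<le> t * n + \<delta>1 * t" "t * n - \<delta>1 * t \<le> l1norm (idx_vec r)"
    using l1norm_scale_diff_bounds[of "idx_vec r" t x "\<delta>1 * t"] t unfolding n_def by auto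
  have "\<delta>1 * t \<le> n * t" using d1 t n by (intro mult_right_mono) auto
  then have Rt: "R \<le> 2 * n * t" using tb rn by (simp add: algebra_simps)
  have tM: "t \<ge> M"
  proof -
    have "2*n*(\<bar>M\<bar>+1) \<le> 2 * n * t" using Rt R1 by linarith
    then have "\<bar>M\<bar>+1 \<le> t" using n by simp
    then show ?thesis by linarith
  qed
  have key: "R * \<alpha> \<ge> t * n * \<alpha> - \<delta>1 * t * \<bar>\<alpha>\<bar> - \<bar>\<alpha>\<bar>"
  proof (cases "\<alpha> \<ge> 0")
    case True
    have "R \<ge> t * n - \<delta>1 * t - 1" using tb rn by linarith
    then have "R * \<alpha> \<ge> (t * n - \<delta>1 * t - 1) * \<alpha>" using True by (intro mult_right_mono) auto
    then show ?thesis using True by (simp add: algebra_simps)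
  next
    case False
    have "R \<le> t * n + \<delta>1 * t" using tb rn by linarith
    then have "R * \<alpha> \<ge> (t * n + \<delta>1 * t) * \<alpha>" using False by (intro mult_right_mono_neg) auto
    then show ?thesis using False by (simp add: algebra_simps)
  qed
  have key2: "R * \<alpha> / n \<ge> t * \<alpha> - t * (\<delta>1 * \<bar>\<alpha>\<bar> / n) - \<bar>\<alpha>\<bar> / n"
  proof -
    have "(t*n*\<alpha> - \<delta>1*t*\<bar>\<alpha>\<bar> - \<bar>\<alpha>\<bar>)/n \<le> R*\<alpha>/n" using key n by (intro divide_right_mono) auto
    moreover have "(t*n*\<alpha> - \<delta>1*t*\<bar>\<alpha>\<bar> - \<bar>\<alpha>\<bar>)/n = t*\<alpha> - t*(\<delta>1*\<bar>\<alpha>\<bar>/n) - \<bar>\<alpha>\<bar>/n"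
      using n by (simp add: field_simps)
    ultimately show ?thesis by linarith
  qed
  have "t * (\<delta>1 * \<bar>\<alpha>\<bar> / n) \<le> t * (\<delta>/2)" using d1 t by (intro mult_left_mono) auto
  moreover have "\<bar>\<alpha>\<bar>/n + D * ln (2*R+3) \<le> R * (\<delta> / (4*n))"
  proof -
    have "(\<bar>\<alpha>\<bar>/n) * (1/R) + D * (ln (2*R+3) / R) < \<delta> / (4*n)" using M0 R1 by auto
    then have "R * ((\<bar>\<alpha>\<bar>/n) * (1/R) + D * (ln (2*R+3) / R)) \<le> R * (\<delta> / (4*n))"
      using R1 by (intro mult_left_mono) auto
    moreover have "R * ((\<bar>\<alpha>\<bar>/n) * (1/R) + D * (ln (2*R+3) / R)) = \<bar>\<alpha>\<bar>/n + D * ln (2*R+3)"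
      using R1 by (simp add: field_simps)
    ultimately show ?thesis by linarith
  qed
  moreover have "R * (\<delta> / (4*n)) \<le> t * (\<delta>/2)"
  proof -
    have "R * (\<delta> / (4*n)) \<le> (2*n*t) * (\<delta> / (4*n))" using Rt d n by (intro mult_right_mono) auto
    also have "\<dots> = t * (\<delta>/2)" using n by (simp add: field_simps)
    finally show ?thesis .
  qed
  ultimately have "ln (f r) \<ge> t * (\<alpha> - \<delta>)" using r(2) lnS key2 by (simp add: algebra_simps)
  then show "\<exists>r T. M \<le> T \<and> 0 < T \<and> l1norm (idx_vec r - T *\<^sub>R x) \<le> \<delta> * T \<and> 0 < f r \<and> T * (\<alpha> - \<delta>) \<le> ln (f r)"
  proof (intro exI[of _ r] exI[of _ t] conjI)
    have "\<delta>1 * t \<le> \<delta> * t" using d1 t by (intro mult_right_mono) auto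
    then show "l1norm (idx_vec r - t *\<^sub>R x) \<le> \<delta> * t" using t by linarith
  qed (use t tM r(3) \<open>ln (f r) \<ge> t * (\<alpha> - \<delta>)\<close> in auto)
qed




lemma l1norm_triangle3: "l1norm (u + v + w) \<le> l1norm u + l1norm v + l1norm w"
  using l1norm_triangle[of "u + v" w] l1norm_triangle[of u v] by linarith

context
  fixes f :: "('d::finite \<Rightarrow> nat) \<Rightarrow> real" and a \<kappa> :: real
  assumes nonneg: "\<And>i. f i \<ge> 0" and apos: "a > 0" and kpos: "\<kappa> > 0" and kle: "\<kappa> \<le> 1"
    and pt: "\<And>p q. \<exists>j. l1norm (idx_vec j - (idx_vec p + idx_vec q)) \<le> a \<and> f j \<ge> \<kappa> * f p * f q"
begin

lemma iter:
  assumes fp: "f p > 0" and k: "k > 0"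
  shows "\<exists>j. l1norm (idx_vec j - real k *\<^sub>R idx_vec p) \<le> real (k-1) * a \<and> f j \<ge> \<kappa>^(k-1) * f p ^ k"
  using k
proof (induction k rule: nat_induct_non_zero)
  case 1
  show ?case by (intro exI[of _ p]) (simp add: l1norm_def)
next
  case (Suc n)
  obtain j where j: "l1norm (idx_vec j - real n *\<^sub>R idx_vec p) \<le> real (n-1) * a" "f j \<ge> \<kappa>^(n-1) * f p ^ n"
    using Suc.IH by blast
  obtain j' where j': "l1norm (idx_vec j' - (idx_vec j + idx_vec p)) \<le> a" "f j' \<ge> \<kappa> * f j * f p"
    using pt by blast
  have e: "idx_vec j' - real (Suc n) *\<^sub>R idx_vec p = (idx_vec j' - (idx_vec j + idx_vec p)) + (idx_vec j - real n *\<^sub>R idx_vec p)"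
    by (simp add: algebra_simps)
  have "l1norm (idx_vec j' - real (Suc n) *\<^sub>R idx_vec p) \<le> l1norm (idx_vec j' - (idx_vec j + idx_vec p)) + l1norm (idx_vec j - real n *\<^sub>R idx_vec p)"
    unfolding e by (rule l1norm_triangle)
  then have "l1norm (idx_vec j' - real (Suc n) *\<^sub>R idx_vec p) \<le> a + real (n-1) * a"
    using j(1) j'(1) by linarith
  also have "\<dots> = real (Suc n - 1) * a" using Suc.hyps by (simp add: algebra_simps of_nat_diff)
  finally have d: "l1norm (idx_vec j' - real (Suc n) *\<^sub>R idx_vec p) \<le> real (Suc n - 1) * a" .
  have "\<kappa> * (\<kappa>^(n-1) * f p ^ n) * f p \<le> \<kappa> * f j * f p"
    using j(2) kpos fp by (intro mult_right_mono mult_left_mono) auto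
  moreover have "\<kappa> * (\<kappa>^(n-1) * f p ^ n) * f p = \<kappa>^(Suc n - 1) * f p ^ Suc n"
    using Suc.hyps by (cases n) (auto simp: algebra_simps)
  ultimately have "f j' \<ge> \<kappa>^(Suc n - 1) * f p ^ Suc n" using j'(2) by linarith
  then show ?case using d by blast
qed


lemma good_goodall:
  assumes gd: "good f x \<alpha>"
  shows "goodall f x \<alpha>"
  unfolding goodall_def
proof (intro allI impI)
  fix \<delta> :: real assume d: "\<delta> > 0"
  define lk where "lk = ln \<kappa>"
  have l0: "lk \<le> 0" unfolding lk_def using kpos kle by simp
  define n where "n = l1norm x"
  have n0: "n \<ge> 0" unfolding n_def by (rule l1norm_nonneg)
  obtain r T0 where rT: "T0 \<ge> 3*a/\<delta> + 3*\<bar>lk\<bar>/\<delta> + 1" "T0 > 0" "l1norm (idx_vec r - T0 *\<^sub>R x) \<le> (\<delta>/3) * T0"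
    "f r > 0" "ln (f r) \<ge> T0 * (\<alpha> - \<delta>/3)"
  proof -
    have "\<delta>/3 > 0" using d by simp
    from gd[unfolded good_def, rule_format, OF this, of "3*a/\<delta> + 3*\<bar>lk\<bar>/\<delta> + 1"]
    show ?thesis using that by blast
  qed
  have aT0: "a / T0 \<le> \<delta>/3"
  proof -
    have "3*\<bar>lk\<bar>/\<delta> \<ge> 0" using d by simp
    then have "3*a/\<delta> \<le> T0" using rT(1) by linarith
    then show ?thesis using d rT(2) apos by (simp add: field_simps)
  qed
  have lT0: "\<bar>lk\<bar> / T0 \<le> \<delta>/3"
  proof -
    have "3*a/\<delta> \<ge> 0" using d apos by simp
    then have "3*\<bar>lk\<bar>/\<delta> \<le> T0" using rT(1) by linarith
    then show ?thesis using d rT(2) by (simp add: field_simps)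
  qed
  define \<gamma> where "\<gamma> = \<alpha> - \<delta>/3 + lk/T0"
  define M where "M = max (max T0 (3*T0*n/\<delta>)) (3*T0*\<bar>\<gamma>\<bar>/\<delta>)"
  show "\<exists>M. \<forall>T\<ge>M. \<exists>r. l1norm (idx_vec r - T *\<^sub>R x) \<le> \<delta> * T \<and> 0 < f r \<and> T * (\<alpha> - \<delta>) \<le> ln (f r)"
  proof (intro exI[of _ M] allI impI)
    fix T assume TM: "T \<ge> M"
    have TT0: "T \<ge> T0" and Tn: "T0 * n \<le> T * (\<delta>/3)" and Tg: "T0 * \<bar>\<gamma>\<bar> \<le> T * (\<delta>/3)"
    proof -
      show "T \<ge> T0" using TM unfolding M_def by auto
      have "3*T0*n/\<delta> \<le> T" using TM unfolding M_def by auto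
      then show "T0 * n \<le> T * (\<delta>/3)" using d by (simp add: field_simps)
      have "3*T0*\<bar>\<gamma>\<bar>/\<delta> \<le> T" using TM unfolding M_def by auto
      then show "T0 * \<bar>\<gamma>\<bar> \<le> T * (\<delta>/3)" using d by (simp add: field_simps)
    qed
    define k where "k = nat \<lfloor>T / T0\<rfloor>"
    have q1: "T / T0 \<ge> 1" using TT0 rT(2) by simp
    have kr: "real k = of_int \<lfloor>T / T0\<rfloor>" unfolding k_def using q1 by simp
    have k1: "k > 0" unfolding k_def using q1 by linarith
    have kT: "real k * T0 \<le> T" "T < real k * T0 + T0"
    proof -
      have "real k \<le> T / T0" "T / T0 < real k + 1" using kr by linarith+
      then show "real k * T0 \<le> T" "T < real k * T0 + T0" using rT(2) by (simp_all add: field_simps)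
    qed
    obtain j where j: "l1norm (idx_vec j - real k *\<^sub>R idx_vec r) \<le> real (k-1) * a" "f j \<ge> \<kappa>^(k-1) * f r ^ k"
      using iter[OF rT(4) k1] by blast
    have pos: "\<kappa>^(k-1) * f r ^ k > 0" using kpos rT(4) by simp
    then have fj: "f j > 0" using j(2) by linarith
    have "ln (f j) \<ge> ln (\<kappa>^(k-1) * f r ^ k)" using j(2) pos by simp
    also have "ln (\<kappa>^(k-1) * f r ^ k) = real (k-1) * lk + real k * ln (f r)"
      using kpos rT(4) unfolding lk_def by (simp add: ln_mult ln_realpow)
    finally have v1: "ln (f j) \<ge> real (k-1) * lk + real k * ln (f r)" .
    have "real (k-1) * lk \<ge> real k * lk" using l0 k1 by (simp add: of_nat_diff algebra_simps)
    moreover have "real k * ln (f r) \<ge> real k * (T0 * (\<alpha> - \<delta>/3))" using rT(5) by (intro mult_left_mono) auto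
    moreover have "(real k * T0) * \<gamma> = real k * (T0 * (\<alpha> - \<delta>/3)) + real k * lk"
      unfolding \<gamma>_def using rT(2) by (simp add: field_simps)
    ultimately have v2: "ln (f j) \<ge> (real k * T0) * \<gamma>" using v1 by linarith
    have v3: "(real k * T0) * \<gamma> \<ge> T * \<gamma> - T0 * \<bar>\<gamma>\<bar>"
    proof (cases "\<gamma> \<ge> 0")
      case True
      have "(T - T0) * \<gamma> \<le> (real k * T0) * \<gamma>" using kT True by (intro mult_right_mono) auto
      then show ?thesis using True by (simp add: algebra_simps)
    next
      case False
      have "T * \<gamma> \<le> (real k * T0) * \<gamma>" using kT False by (intro mult_right_mono_neg) auto
      moreover have "T0 * \<bar>\<gamma>\<bar> \<ge> 0" using rT(2) by simp
      ultimately show ?thesis by linarith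
    qed
    have "T * \<gamma> = T * (\<alpha> - \<delta>/3) + T * (lk / T0)" unfolding \<gamma>_def by (simp add: algebra_simps)
    moreover have "T * (lk / T0) \<ge> - (T * (\<delta>/3))"
    proof -
      have "\<bar>lk / T0\<bar> \<le> \<delta>/3" using lT0 rT(2) by simp
      then have "lk / T0 \<ge> - (\<delta>/3)" by linarith
      then have "T * (lk / T0) \<ge> T * (- (\<delta>/3))" using TT0 rT(2) by (intro mult_left_mono) auto
      then show ?thesis by simp
    qed
    ultimately have "ln (f j) \<ge> T * (\<alpha> - \<delta>)" using v2 v3 Tg by (simp add: algebra_simps)
    have decomp: "idx_vec j - T *\<^sub>R x = (idx_vec j - real k *\<^sub>R idx_vec r) + real k *\<^sub>R (idx_vec r - T0 *\<^sub>R x) + (real k * T0 - T) *\<^sub>R x"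
      by (simp add: algebra_simps)
    have "l1norm (idx_vec j - T *\<^sub>R x) \<le> l1norm (idx_vec j - real k *\<^sub>R idx_vec r) + l1norm (real k *\<^sub>R (idx_vec r - T0 *\<^sub>R x)) + l1norm ((real k * T0 - T) *\<^sub>R x)"
      unfolding decomp by (rule l1norm_triangle3)
    also have "\<dots> \<le> real k * a + real k * ((\<delta>/3) * T0) + T0 * n"
    proof -
      have "l1norm (idx_vec j - real k *\<^sub>R idx_vec r) \<le> real k * a"
      proof -
        have "real (k-1) * a \<le> real k * a" using apos by (intro mult_right_mono) auto
        then show ?thesis using j(1) by linarith
      qed
      moreover have "l1norm (real k *\<^sub>R (idx_vec r - T0 *\<^sub>R x)) \<le> real k * ((\<delta>/3) * T0)"
      proof -
        have "real k * l1norm (idx_vec r - T0 *\<^sub>R x) \<le> real k * ((\<delta>/3) * T0)"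
          using rT(3) by (intro mult_left_mono) auto
        then show ?thesis by (simp add: l1norm_scale)
      qed
      moreover have "l1norm ((real k * T0 - T) *\<^sub>R x) \<le> T0 * n"
      proof -
        have "\<bar>real k * T0 - T\<bar> \<le> T0" using kT by linarith
        then show ?thesis using n0 unfolding n_def by (simp add: l1norm_scale mult_right_mono)
      qed
      ultimately show ?thesis by linarith
    qed
    also have "\<dots> \<le> \<delta> * T"
    proof -
      have "real k * a = (real k * T0) * (a / T0)" using rT(2) by simp
      also have "\<dots> \<le> T * (\<delta>/3)" using kT aT0 apos rT(2) TT0 by (intro mult_mono) auto
      finally have A: "real k * a \<le> T * (\<delta>/3)" .
      have B: "real k * ((\<delta>/3) * T0) \<le> T * (\<delta>/3)"
        using kT d by (simp add: mult.commute mult.left_commute mult_left_mono)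
      show ?thesis using A B Tn by (simp add: algebra_simps)
    qed
    finally show "\<exists>r. l1norm (idx_vec r - T *\<^sub>R x) \<le> \<delta> * T \<and> 0 < f r \<and> T * (\<alpha> - \<delta>) \<le> ln (f r)"
      using fj \<open>ln (f j) \<ge> T * (\<alpha> - \<delta>)\<close> by blast
  qed
qed


lemma goodall_add:
  assumes gx: "goodall f x \<alpha>" and gy: "goodall f y \<beta>"
  shows "goodall f (x + y) (\<alpha> + \<beta>)"
  unfolding goodall_def
proof (intro allI impI)
  fix \<delta> :: real assume d: "\<delta> > 0"
  define lk where "lk = ln \<kappa>"
  obtain Mx where Mx: "\<And>T. T \<ge> Mx \<Longrightarrow> \<exists>r. l1norm (idx_vec r - T *\<^sub>R x) \<le> (\<delta>/3) * T \<and> f r > 0 \<and> ln (f r) \<ge> T * (\<alpha> - \<delta>/3)"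
  proof -
    have "\<delta>/3 > 0" using d by simp
    from gx[unfolded goodall_def, rule_format, OF this] show ?thesis using that by blast
  qed
  obtain My where My: "\<And>T. T \<ge> My \<Longrightarrow> \<exists>r. l1norm (idx_vec r - T *\<^sub>R y) \<le> (\<delta>/3) * T \<and> f r > 0 \<and> ln (f r) \<ge> T * (\<beta> - \<delta>/3)"
  proof -
    have "\<delta>/3 > 0" using d by simp
    from gy[unfolded goodall_def, rule_format, OF this] show ?thesis using that by blast
  qed
  define M where "M = max (max Mx My) (max (3*a/\<delta>) (3*\<bar>lk\<bar>/\<delta>))"
  show "\<exists>M. \<forall>T\<ge>M. \<exists>r. l1norm (idx_vec r - T *\<^sub>R (x + y)) \<le> \<delta> * T \<and> 0 < f r \<and> T * (\<alpha> + \<beta> - \<delta>) \<le> ln (f r)"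
  proof (intro exI[of _ M] allI impI)
    fix T assume TM: "T \<ge> M"
    obtain rx where rx: "l1norm (idx_vec rx - T *\<^sub>R x) \<le> (\<delta>/3) * T" "f rx > 0" "ln (f rx) \<ge> T * (\<alpha> - \<delta>/3)"
      using Mx[of T] TM unfolding M_def by auto
    obtain ry where ry: "l1norm (idx_vec ry - T *\<^sub>R y) \<le> (\<delta>/3) * T" "f ry > 0" "ln (f ry) \<ge> T * (\<beta> - \<delta>/3)"
      using My[of T] TM unfolding M_def by auto
    obtain j where j: "l1norm (idx_vec j - (idx_vec rx + idx_vec ry)) \<le> a" "f j \<ge> \<kappa> * f rx * f ry"
      using pt by blast
    have Ta: "a \<le> T * (\<delta>/3)" and Tl: "\<bar>lk\<bar> \<le> T * (\<delta>/3)"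
    proof -
      have "3*a/\<delta> \<le> T" "3*\<bar>lk\<bar>/\<delta> \<le> T" using TM unfolding M_def by auto
      then show "a \<le> T * (\<delta>/3)" "\<bar>lk\<bar> \<le> T * (\<delta>/3)" using d by (simp_all add: field_simps)
    qed
    have pos: "\<kappa> * f rx * f ry > 0" using kpos rx ry by simp
    then have fj: "f j > 0" using j by linarith
    have "ln (f j) \<ge> ln (\<kappa> * f rx * f ry)" using j pos by simp
    also have "ln (\<kappa> * f rx * f ry) = lk + ln (f rx) + ln (f ry)" unfolding lk_def using kpos rx ry by (simp add: ln_mult)
    finally have "ln (f j) \<ge> T * (\<alpha> + \<beta> - \<delta>)" using rx(3) ry(3) Tl by (simp add: algebra_simps)
    moreover have "l1norm (idx_vec j - T *\<^sub>R (x + y)) \<le> \<delta> * T"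
    proof -
      have e: "idx_vec j - T *\<^sub>R (x + y) = (idx_vec j - (idx_vec rx + idx_vec ry)) + (idx_vec rx - T *\<^sub>R x) + (idx_vec ry - T *\<^sub>R y)"
        by (simp add: algebra_simps)
      have "l1norm (idx_vec j - T *\<^sub>R (x + y)) \<le> l1norm (idx_vec j - (idx_vec rx + idx_vec ry)) + l1norm (idx_vec rx - T *\<^sub>R x) + l1norm (idx_vec ry - T *\<^sub>R y)"
        unfolding e by (rule l1norm_triangle3)
      then show ?thesis using j(1) rx(1) ry(1) Ta by (simp add: algebra_simps)
    qed
    ultimately show "\<exists>r. l1norm (idx_vec r - T *\<^sub>R (x + y)) \<le> \<delta> * T \<and> 0 < f r \<and> T * (\<alpha> + \<beta> - \<delta>) \<le> ln (f r)"
      using fj by blast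
  qed
qed

end




lemma psi_superadd:
  fixes f :: "('d::finite \<Rightarrow> nat) \<Rightarrow> real"
  assumes nonneg: "\<And>i. f i \<ge> 0"
    and CG: "\<exists>a>0. \<exists>b>0. \<exists>c>0. \<forall>x y :: real^'d.
               nu_ball f (x + y) a \<ge> c * nu_ball f x b * nu_ball f y b"
    and tau_fin: "(SUP x\<in>{x :: real^'d. l1norm x = 1}. psi f x) < \<infinity>"
  shows "psi f x + psi f y \<le> psi f (x + y)"
proof -
  obtain a \<kappa> where ak: "a > 0" "\<kappa> > 0" "\<kappa> \<le> 1"
    and pt: "\<And>p q. \<exists>j. l1norm (idx_vec j - (idx_vec p + idx_vec q)) \<le> a \<and> f j \<ge> \<kappa> * f p * f q"
    using CG_point[OF nonneg CG] by blast
  note gg = good_goodall[OF nonneg ak pt] and ga = goodall_add[OF nonneg ak pt]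
  obtain B where B: "\<And>x. psi f x \<le> ereal (B * l1norm x)" using psi_bound[OF tau_fin] by blast
  have fin: "psi f z \<noteq> \<infinity>" for z using B[of z] by auto
  show ?thesis
  proof (cases "x = 0 \<or> y = 0")
    case True
    then show ?thesis by (auto simp: psi_def)
  next
    case False
    then have x: "x \<noteq> 0" and y: "y \<noteq> 0" by auto
    show ?thesis
    proof (cases "psi f x = -\<infinity> \<or> psi f y = -\<infinity>")
      case True
      have s: "psi f x + psi f y = -\<infinity>" using True fin[of x] fin[of y]
        by (cases "psi f x"; cases "psi f y") auto
      show ?thesis unfolding s by simp
    next
      case False
      then obtain px py where px: "psi f x = ereal px" and py: "psi f y = ereal py"
        using fin[of x] fin[of y] by (cases "psi f x"; cases "psi f y") auto
      have "ereal (px + py) \<le> psi f (x + y)"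
      proof (rule ereal_ge_eps)
        fix e :: real assume e: "e > 0"
        have "psi f x > ereal (px - e/2)" using px e by simp
        then have gx: "good f x (px - e/2)" by (rule psi_good[OF nonneg x])
        have "psi f y > ereal (py - e/2)" using py e by simp
        then have gy: "good f y (py - e/2)" by (rule psi_good[OF nonneg y])
        have "goodall f (x + y) ((px - e/2) + (py - e/2))" by (rule ga[OF gg[OF gx] gg[OF gy]])
        then have g: "good f (x + y) (px + py - e)" by (auto dest: goodall_good simp: algebra_simps)
        have "x + y \<noteq> 0"
        proof -
          obtain k where k: "x $ k \<noteq> 0" using x by (auto simp: vec_eq_iff)
          have "x $ k \<ge> 0" "y $ k \<ge> 0" using good_nonneg[OF gx] good_nonneg[OF gy] by auto
          then have "(x + y) $ k > 0" using k by simp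
          then show ?thesis by (metis less_irrefl zero_index)
        qed
        then show "ereal (px + py - e) \<le> psi f (x + y)" by (rule good_psi[OF nonneg g])
      qed
      then show ?thesis using px py by simp
    qed
  qed
qed




definition Kset :: "(('d::finite \<Rightarrow> nat) \<Rightarrow> real) \<Rightarrow> (real^'d) set" where
  "Kset f = {\<theta>. \<forall>y. psi f y \<le> ereal (- (y \<bullet> \<theta>))}"

lemma inner_bound: "\<bar>v \<bullet> (\<theta>::real^'d::finite)\<bar> \<le> l1norm v * (\<Sum>k\<in>UNIV. \<bar>\<theta>$k\<bar>)"
proof -
  have "\<bar>v \<bullet> \<theta>\<bar> = \<bar>\<Sum>k\<in>UNIV. v$k * \<theta>$k\<bar>" by (simp add: inner_vec_def)
  also have "\<dots> \<le> (\<Sum>k\<in>UNIV. \<bar>v$k\<bar> * \<bar>\<theta>$k\<bar>)" by (rule order_trans[OF sum_abs]) (simp add: abs_mult)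
  also have "\<dots> \<le> (\<Sum>k\<in>UNIV. \<bar>v$k\<bar> * (\<Sum>k\<in>UNIV. \<bar>\<theta>$k\<bar>))"
    by (intro sum_mono mult_left_mono member_le_sum) auto
  also have "\<dots> = l1norm v * (\<Sum>k\<in>UNIV. \<bar>\<theta>$k\<bar>)" unfolding l1norm_def by (simp add: sum_distrib_right)
  finally show ?thesis .
qed

lemma dirA:
  fixes f :: "('d::finite \<Rightarrow> nat) \<Rightarrow> real"
  assumes nonneg: "\<And>i. f i \<ge> 0" and bnd: "\<And>i. f i * exp (idx_vec i \<bullet> \<theta>) \<le> M"
  shows "psi f x \<le> ereal (- (x \<bullet> \<theta>))"
proof (cases "x = 0")
  case True then show ?thesis by (simp add: psi_def)
next
  case x: False
  show ?thesis
  proof (rule ccontr)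
    assume "\<not> ?thesis"
    then have "ereal (- (x \<bullet> \<theta>)) < psi f x" by simp
    then obtain \<alpha> where al: "ereal (- (x \<bullet> \<theta>)) < ereal \<alpha>" "ereal \<alpha> < psi f x" using ereal_dense2 by blast
    define g where "g = \<alpha> + x \<bullet> \<theta>"
    have g: "g > 0" using al(1) unfolding g_def by simp
    define \<Theta> where "\<Theta> = (\<Sum>k\<in>UNIV. \<bar>\<theta>$k\<bar>)"
    have Th: "\<Theta> \<ge> 0" unfolding \<Theta>_def by (simp add: sum_nonneg)
    define \<delta> where "\<delta> = g / (2 * (1 + \<Theta>))"
    have d: "\<delta> > 0" unfolding \<delta>_def using g Th by simp
    have "\<delta> * (1 + \<Theta>) = g / 2" unfolding \<delta>_def using Th by (simp add: divide_simps)
    then have dd: "\<delta> + \<delta> * \<Theta> = g / 2" by (simp add: algebra_simps)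
    have gd: "good f x \<alpha>" using psi_good[OF nonneg x al(2)] .
    obtain r T where rT: "T \<ge> 2 * (\<bar>ln (max M 1)\<bar> + 1) / g" "T > 0" "l1norm (idx_vec r - T *\<^sub>R x) \<le> \<delta> * T"
      "f r > 0" "ln (f r) \<ge> T * (\<alpha> - \<delta>)"
      using gd d unfolding good_def by blast
    have Mpos: "M > 0" using bnd[of r] rT(4) by (smt (verit) exp_gt_zero mult_pos_pos)
    have "ln (f r * exp (idx_vec r \<bullet> \<theta>)) \<le> ln M" using bnd[of r] rT(4) Mpos by simp
    then have l1: "ln (f r) + idx_vec r \<bullet> \<theta> \<le> ln M" using rT(4) by (simp add: ln_mult)
    have "idx_vec r \<bullet> \<theta> = T * (x \<bullet> \<theta>) + (idx_vec r - T *\<^sub>R x) \<bullet> \<theta>" by (simp add: algebra_simps)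
    moreover have "\<bar>(idx_vec r - T *\<^sub>R x) \<bullet> \<theta>\<bar> \<le> \<delta> * T * \<Theta>"
      using inner_bound[of "idx_vec r - T *\<^sub>R x" \<theta>] rT(3) Th unfolding \<Theta>_def
      by (meson mult_right_mono order_trans)
    ultimately have l2: "idx_vec r \<bullet> \<theta> \<ge> T * (x \<bullet> \<theta>) - \<delta> * T * \<Theta>" by linarith
    have "T * (\<alpha> - \<delta>) + T * (x \<bullet> \<theta>) - \<delta> * T * \<Theta> \<le> ln M" using l1 l2 rT(5) by linarith
    moreover have "T * (\<alpha> - \<delta>) + T * (x \<bullet> \<theta>) - \<delta> * T * \<Theta> = T * (g - (\<delta> + \<delta> * \<Theta>))"
      unfolding g_def by (simp add: algebra_simps)
    ultimately have "T * (g / 2) \<le> ln M" using dd by simp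
    moreover have "T * (g / 2) \<ge> \<bar>ln (max M 1)\<bar> + 1" using rT(1) g by (simp add: field_simps)
    moreover have "ln M \<le> \<bar>ln (max M 1)\<bar>" using Mpos by (cases "M \<le> 1") auto
    ultimately show False by linarith
  qed
qed

lemma Relog_exp:
  fixes z :: "complex^'d::finite"
  assumes "\<forall>k. z$k \<noteq> 0"
  shows "exp (idx_vec i \<bullet> Relog z) = (\<Prod>k\<in>UNIV. norm (z $ k) ^ i k)"
proof -
  have "exp (idx_vec i \<bullet> Relog z) = exp (\<Sum>k\<in>UNIV. real (i k) * ln (norm (z$k)))"
    by (simp add: inner_vec_def idx_vec_def Relog_def)
  also have "\<dots> = (\<Prod>k\<in>UNIV. exp (real (i k) * ln (norm (z$k))))" by (simp add: exp_sum)
  also have "\<dots> = (\<Prod>k\<in>UNIV. norm (z $ k) ^ i k)"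
  proof (rule prod.cong[OF refl])
    fix k
    have "norm (z$k) > 0" using assms by simp
    then show "exp (real (i k) * ln (norm (z$k))) = norm (z $ k) ^ i k"
      by (simp add: ln_realpow[symmetric])
  qed
  finally show ?thesis .
qed

lemma omega_bound:
  fixes f :: "('d::finite \<Rightarrow> nat) \<Rightarrow> real"
  assumes nonneg: "\<And>i. f i \<ge> 0" and th: "\<theta> \<in> Omega f"
  shows "\<exists>M. \<forall>i. f i * exp (idx_vec i \<bullet> \<theta>) \<le> M"
proof -
  obtain z where z: "\<theta> = Relog z" "z \<in> interior (abs_conv_domain f)" "\<forall>k. z$k \<noteq> 0"
    using th unfolding Omega_def by auto
  have "z \<in> abs_conv_domain f" using z(2) interior_subset by blast
  then have sm: "(\<lambda>i. f i * (\<Prod>k\<in>UNIV. norm (z $ k) ^ i k)) summable_on UNIV"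
    unfolding abs_conv_domain_def by simp
  let ?g = "\<lambda>i. f i * (\<Prod>k\<in>UNIV. norm (z $ k) ^ i k)"
  have "?g i \<le> infsum ?g UNIV" for i
  proof -
    have "sum ?g {i} \<le> infsum ?g UNIV"
      by (rule finite_sum_le_infsum[OF sm]) (auto intro!: mult_nonneg_nonneg prod_nonneg nonneg)
    then show ?thesis by simp
  qed
  then show ?thesis using Relog_exp[OF z(3)] z(1) by (intro exI[of _ "infsum ?g UNIV"]) auto
qed

lemma Omega_sub_K:
  fixes f :: "('d::finite \<Rightarrow> nat) \<Rightarrow> real"
  assumes nonneg: "\<And>i. f i \<ge> 0"
  shows "Omega f \<subseteq> Kset f"
proof
  fix \<theta> assume "\<theta> \<in> Omega f"
  then obtain M where "\<And>i. f i * exp (idx_vec i \<bullet> \<theta>) \<le> M" using omega_bound[of f, OF nonneg] by blast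
  then show "\<theta> \<in> Kset f" unfolding Kset_def using dirA[of f, OF nonneg] by blast
qed

lemma Kset_closed:
  fixes f :: "('d::finite \<Rightarrow> nat) \<Rightarrow> real"
  shows "closed (Kset f)"
proof -
  have e: "Kset f = (\<Inter>y. {\<theta>. psi f y \<le> ereal (- (y \<bullet> \<theta>))})" unfolding Kset_def by auto
  have "closed {\<theta>::real^'d. psi f y \<le> ereal (- (y \<bullet> \<theta>))}" for y
  proof (cases "psi f y")
    case (real p)
    then have "{\<theta>::real^'d. psi f y \<le> ereal (- (y \<bullet> \<theta>))} = {\<theta>. y \<bullet> \<theta> \<le> - p}" by auto
    then show ?thesis by (simp add: closed_halfspace_le)
  qed auto
  then show ?thesis unfolding e by (intro closed_INT) auto
qed




definition Splus :: "(real^'d::finite) set" where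
  "Splus = {u. (\<forall>k. u$k \<ge> 0) \<and> l1norm u = 1}"

lemma Splus_compact: "compact (Splus :: (real^'d::finite) set)"
proof -
  have "bounded (Splus :: (real^'d) set)"
    unfolding bounded_iff Splus_def by (intro exI[of _ 1]) (metis (mono_tags, lifting) mem_Collect_eq norm_le_l1norm)
  moreover have "closed (Splus :: (real^'d) set)"
  proof -
    have e: "(Splus :: (real^'d) set) = (\<Inter>k. {u. 0 \<le> u$k}) \<inter> {u. l1norm u = 1}" unfolding Splus_def by auto
    have "closed {u::real^'d. 0 \<le> u$k}" for k by (rule closed_Collect_le) (auto intro: continuous_intros)
    moreover have "closed {u::real^'d. l1norm u = 1}" by (rule closed_Collect_eq) (auto intro: continuous_l1norm continuous_intros)
    ultimately show ?thesis unfolding e by (intro closed_Int closed_INT) auto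
  qed
  ultimately show ?thesis using compact_eq_bounded_closed by blast
qed

lemma local_bound:
  fixes f :: "('d::finite \<Rightarrow> nat) \<Rightarrow> real"
  assumes nonneg: "\<And>i. f i \<ge> 0" and th: "\<theta> \<in> Kset f" and eta: "\<eta> > 0" and u: "u \<in> Splus"
  shows "\<exists>W R0. open_cone W \<and> u \<in> W \<and> R0 \<ge> 1 \<and> (\<forall>i. idx_vec i \<in> W \<longrightarrow> l1norm (idx_vec i) \<ge> R0 \<longrightarrow>
     f i * exp (idx_vec i \<bullet> \<theta>) \<le> exp (\<eta> * l1norm (idx_vec i)))"
proof -
  have u1: "l1norm u = 1" using u unfolding Splus_def by auto
  then have u0: "u \<noteq> 0" by (auto simp: l1norm_def)
  define \<Theta> where "\<Theta> = (\<Sum>k\<in>UNIV. \<bar>\<theta>$k\<bar>)"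
  have Th: "\<Theta> \<ge> 0" unfolding \<Theta>_def by (simp add: sum_nonneg)
  have "psi f u \<le> ereal (- (u \<bullet> \<theta>))" using th unfolding Kset_def by auto
  also have "\<dots> < ereal (- (u \<bullet> \<theta>) + \<eta>/2)" using eta by simp
  finally obtain C where C: "open_cone C" "u \<in> C" "ereal (l1norm u) * tau_cone f C < ereal (- (u \<bullet> \<theta>) + \<eta>/2)"
    using psi_lessE[OF u0] by blast
  define \<delta> where "\<delta> = min (1/2) (\<eta> / (8 * (\<Theta> + 1)))"
  have d: "\<delta> > 0" "\<delta> \<le> 1/2" "\<delta> \<le> \<eta> / (8 * (\<Theta> + 1))" unfolding \<delta>_def using eta Th
    by (auto simp del: min_less_iff_conj simp add: min_def)
  have d4: "4 * \<delta> * \<Theta> \<le> \<eta> / 2"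
  proof -
    have "4 * \<delta> * \<Theta> \<le> 4 * (\<eta> / (8 * (\<Theta> + 1))) * \<Theta>" using d Th by (intro mult_right_mono) auto
    also have "\<dots> = (\<eta>/2) * (\<Theta> / (\<Theta> + 1))" using Th by (simp add: field_simps)
    also have "\<dots> \<le> (\<eta>/2) * 1" using Th eta by (intro mult_left_mono) auto
    finally show ?thesis by simp
  qed
  define W where "W = C \<inter> ncone u \<delta>"
  have W: "open_cone W" "u \<in> W" unfolding W_def using C ncone_mem[OF d(1)]
    by (auto intro!: open_cone_Int[OF _ ncone_open_cone])
  have "tau_cone f W \<le> tau_cone f C" unfolding W_def by (rule tau_mono[OF nonneg]) auto
  then have "tau_cone f W < ereal (- (u \<bullet> \<theta>) + \<eta>/2)" using C(3) u1 by simp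
  then have "eventually (\<lambda>R. ereal (1/R) * elog (sum f (annulus W R)) < ereal (- (u \<bullet> \<theta>) + \<eta>/2)) at_top"
    unfolding tau_cone_annulus by (rule Limsup_lessD)
  then obtain R1 where R1: "\<And>R. R \<ge> R1 \<Longrightarrow> ereal (1/R) * elog (sum f (annulus W R)) < ereal (- (u \<bullet> \<theta>) + \<eta>/2)"
    by (auto simp: eventually_at_top_linorder)
  define R0 where "R0 = max R1 1"
  have "f i * exp (idx_vec i \<bullet> \<theta>) \<le> exp (\<eta> * l1norm (idx_vec i))"
    if iW: "idx_vec i \<in> W" and iR: "l1norm (idx_vec i) \<ge> R0" for i
  proof (cases "f i = 0")
    case True then show ?thesis by simp
  next
    case False
    then have fi: "f i > 0" using nonneg[of i] by simp
    define R where "R = l1norm (idx_vec i)"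
    have R: "R \<ge> 1" "R \<ge> R1" using iR unfolding R0_def R_def by auto
    have ia: "i \<in> annulus W R" unfolding annulus_def R_def using iW by auto
    have sge: "sum f (annulus W R) \<ge> f i"
      using ia annulus_finite[of W R] by (intro member_le_sum) (auto simp: nonneg)
    then have spos: "sum f (annulus W R) > 0" using fi by linarith
    have "ereal (ln (sum f (annulus W R)) / R) < ereal (- (u \<bullet> \<theta>) + \<eta>/2)"
      using R1[OF R(2)] spos by (simp add: elog_ge)
    then have "ln (sum f (annulus W R)) < R * (- (u \<bullet> \<theta>) + \<eta>/2)" using R by (simp add: field_simps)
    moreover have "ln (f i) \<le> ln (sum f (annulus W R))" using sge fi by simp
    ultimately have lf: "ln (f i) < R * (- (u \<bullet> \<theta>) + \<eta>/2)" by linarith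
    obtain t where t: "t > 0" "l1norm (idx_vec i - t *\<^sub>R u) < \<delta> * t"
      using iW unfolding W_def ncone_def by auto
    have tb: "R \<le> t * 1 + \<delta> * t" "t * 1 - \<delta> * t \<le> R"
      using l1norm_scale_diff_bounds[of "idx_vec i" t u "\<delta> * t"] t u1 unfolding R_def by auto
    have t2: "t \<le> 2 * R"
    proof -
      have "\<delta> * t \<le> (1/2) * t" using d t by (intro mult_right_mono) auto
      then show ?thesis using tb by linarith
    qed
    have "idx_vec i \<bullet> \<theta> = t * (u \<bullet> \<theta>) + (idx_vec i - t *\<^sub>R u) \<bullet> \<theta>" by (simp add: algebra_simps)
    moreover have "\<bar>(idx_vec i - t *\<^sub>R u) \<bullet> \<theta>\<bar> \<le> \<delta> * t * \<Theta>"
      using inner_bound[of "idx_vec i - t *\<^sub>R u" \<theta>] t Th unfolding \<Theta>_def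
      by (meson less_imp_le mult_right_mono order_trans)
    moreover have "t * (u \<bullet> \<theta>) \<le> R * (u \<bullet> \<theta>) + \<delta> * t * \<Theta>"
    proof -
      have ut: "\<bar>u \<bullet> \<theta>\<bar> \<le> \<Theta>" using inner_bound[of u \<theta>] u1 unfolding \<Theta>_def by simp
      have "\<bar>t - R\<bar> \<le> \<delta> * t" using tb by linarith
      then have "\<bar>t - R\<bar> * \<bar>u \<bullet> \<theta>\<bar> \<le> (\<delta> * t) * \<Theta>" using ut by (intro mult_mono) auto
      moreover have "t * (u \<bullet> \<theta>) - R * (u \<bullet> \<theta>) \<le> \<bar>t - R\<bar> * \<bar>u \<bullet> \<theta>\<bar>"
        by (metis abs_ge_self abs_mult left_diff_distrib)
      ultimately show ?thesis by linarith
    qed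
    ultimately have "idx_vec i \<bullet> \<theta> \<le> R * (u \<bullet> \<theta>) + 2 * (\<delta> * t * \<Theta>)" by linarith
    moreover have "2 * (\<delta> * t * \<Theta>) \<le> R * (\<eta>/2)"
    proof -
      have "2 * (\<delta> * t * \<Theta>) \<le> 2 * (\<delta> * (2 * R) * \<Theta>)" using t2 d Th by (intro mult_left_mono mult_right_mono) auto
      also have "\<dots> = R * (4 * \<delta> * \<Theta>)" by simp
      also have "\<dots> \<le> R * (\<eta>/2)" using d4 R by (intro mult_left_mono) auto
      finally show ?thesis .
    qed
    ultimately have "ln (f i) + idx_vec i \<bullet> \<theta> \<le> \<eta> * R" using lf by (simp add: algebra_simps)
    then have "exp (ln (f i) + idx_vec i \<bullet> \<theta>) \<le> exp (\<eta> * R)" by simp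
    then show ?thesis using fi unfolding R_def by (simp add: exp_add)
  qed
  then show ?thesis using W by (intro exI[of _ W] exI[of _ R0]) (auto simp: R0_def)
qed




lemma global_bound:
  fixes f :: "('d::finite \<Rightarrow> nat) \<Rightarrow> real"
  assumes nonneg: "\<And>i. f i \<ge> 0" and th: "\<theta> \<in> Kset f" and eta: "\<eta> > 0"
  shows "\<exists>A\<ge>1. \<forall>i. f i * exp (idx_vec i \<bullet> \<theta>) \<le> A * exp (\<eta> * l1norm (idx_vec i))"
proof -
  let ?P = "\<lambda>u W R0. open_cone W \<and> u \<in> W \<and> R0 \<ge> 1 \<and> (\<forall>i. idx_vec i \<in> W \<longrightarrow> l1norm (idx_vec i) \<ge> R0 \<longrightarrow>
     f i * exp (idx_vec i \<bullet> \<theta>) \<le> exp (\<eta> * l1norm (idx_vec i)))"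
  have "\<forall>u\<in>Splus. \<exists>p. ?P u (fst p) (snd p)" using local_bound[OF nonneg th eta] by fastforce
  then obtain p where p: "\<And>u. u \<in> Splus \<Longrightarrow> ?P u (fst (p u)) (snd (p u))" by metis
  define Wf where "Wf u = fst (p u)" for u
  define Rf where "Rf u = snd (p u)" for u
  have Wo: "open (Wf u)" if "u \<in> Splus" for u using p[OF that] unfolding Wf_def open_cone_def by auto
  have cov: "Splus \<subseteq> (\<Union>u\<in>Splus. Wf u)" using p unfolding Wf_def by auto
  obtain U where U: "U \<subseteq> Splus" "finite U" "Splus \<subseteq> (\<Union>u\<in>U. Wf u)"
    using compactE_image[OF Splus_compact Wo cov] by metis
  define Rs where "Rs = 1 + (\<Sum>u\<in>U. Rf u)"
  have Rf1: "Rf u \<ge> 1" if "u \<in> U" for u using p U that unfolding Rf_def by auto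
  have RfRs: "Rf u \<le> Rs" if "u \<in> U" for u
  proof -
    have "Rf u \<le> (\<Sum>u\<in>U. Rf u)" using U(2) that Rf1 by (intro member_le_sum) (auto intro: order_trans[OF zero_le_one])
    then show ?thesis unfolding Rs_def by simp
  qed
  have Rs0: "Rs \<ge> 1" unfolding Rs_def using Rf1 by (simp add: sum_nonneg order_trans[OF zero_le_one])
  define F where "F = {i::'d\<Rightarrow>nat. l1norm (idx_vec i - 0) \<le> Rs}"
  have fF: "finite F" unfolding F_def using ball_card[of Rs "0::real^'d"] Rs0 by simp
  define A0 where "A0 = (\<Sum>i\<in>F. f i * exp (idx_vec i \<bullet> \<theta>))"
  have A0: "A0 \<ge> 0" unfolding A0_def by (intro sum_nonneg) (simp add: nonneg)
  have "f i * exp (idx_vec i \<bullet> \<theta>) \<le> (A0 + 1) * exp (\<eta> * l1norm (idx_vec i))" for i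
  proof -
    have e1: "exp (\<eta> * l1norm (idx_vec i)) \<ge> 1" using eta l1norm_nonneg[of "idx_vec i"] by simp
    show ?thesis
    proof (cases "l1norm (idx_vec i) \<le> Rs")
      case True
      then have "i \<in> F" unfolding F_def by simp
      then have "f i * exp (idx_vec i \<bullet> \<theta>) \<le> A0" unfolding A0_def using fF
        by (intro member_le_sum) (auto simp: nonneg)
      also have "\<dots> \<le> (A0 + 1) * 1" by simp
      also have "\<dots> \<le> (A0 + 1) * exp (\<eta> * l1norm (idx_vec i))" using e1 A0 by (intro mult_left_mono) auto
      finally show ?thesis .
    next
      case False
      define n where "n = l1norm (idx_vec i)"
      have n: "n > Rs" "n > 0" using False Rs0 unfolding n_def by auto
      define v where "v = (1/n) *\<^sub>R idx_vec i"
      have "v \<in> Splus" unfolding Splus_def v_def using n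
        by (auto simp: l1norm_scale n_def idx_vec_comp)
      then obtain u where u: "u \<in> U" "v \<in> Wf u" using U(3) by blast
      have Pu: "?P u (Wf u) (Rf u)" using p U(1) u(1) unfolding Wf_def Rf_def by auto
      have "n *\<^sub>R v \<in> Wf u" using Pu u(2) n unfolding open_cone_def by auto
      then have iW: "idx_vec i \<in> Wf u" unfolding v_def using n by simp
      have "l1norm (idx_vec i) \<ge> Rf u" using RfRs[OF u(1)] n unfolding n_def by linarith
      then have "f i * exp (idx_vec i \<bullet> \<theta>) \<le> exp (\<eta> * l1norm (idx_vec i))" using Pu iW by blast
      also have "\<dots> \<le> (A0 + 1) * exp (\<eta> * l1norm (idx_vec i))" using A0 by simp
      finally show ?thesis .
    qed
  qed
  then show ?thesis using A0 by (intro exI[of _ "A0 + 1"]) auto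
qed

lemma exp_l1_prod:
  "exp (- c * l1norm (idx_vec (i::'d::finite\<Rightarrow>nat))) = (\<Prod>k\<in>UNIV. exp (- c) ^ i k)"
proof -
  have "exp (- c * l1norm (idx_vec i)) = exp (\<Sum>k\<in>UNIV. real (i k) * (- c))"
    by (simp add: l1norm_idx sum_distrib_left mult.commute)
  also have "\<dots> = (\<Prod>k\<in>UNIV. exp (real (i k) * (- c)))" by (simp add: exp_sum)
  also have "\<dots> = (\<Prod>k\<in>UNIV. exp (- c) ^ i k)"
    by (rule prod.cong[OF refl]) (simp only: exp_of_nat_mult)
  finally show ?thesis .
qed

lemma geo_summable:
  assumes c: "c > 0"
  shows "(\<lambda>i::'d::finite\<Rightarrow>nat. exp (- c * l1norm (idx_vec i))) summable_on UNIV"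
proof (rule nonneg_bdd_above_summable_on)
  let ?q = "exp (- c)"
  have q: "?q < 1" "?q \<ge> 0" using c by auto
  show "bdd_above (sum (\<lambda>i::'d\<Rightarrow>nat. exp (- c * l1norm (idx_vec i))) ` {F. F \<subseteq> UNIV \<and> finite F})"
  proof (rule bdd_aboveI2)
    fix F :: "('d\<Rightarrow>nat) set" assume "F \<in> {F. F \<subseteq> UNIV \<and> finite F}"
    then have fF: "finite F" by simp
    define N where "N = (\<Sum>i\<in>F. \<Sum>k\<in>UNIV. i k)"
    have sub: "F \<subseteq> PiE UNIV (\<lambda>_. {..N})"
    proof
      fix i assume iF: "i \<in> F"
      have "i k \<le> N" for k
      proof -
        have "i k \<le> (\<Sum>k\<in>UNIV. i k)" by (rule member_le_sum) auto
        also have "\<dots> \<le> N" unfolding N_def using fF iF by (intro member_le_sum) auto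
        finally show ?thesis .
      qed
      then show "i \<in> PiE UNIV (\<lambda>_. {..N})" by (auto simp: PiE_UNIV_domain)
    qed
    have "(\<Sum>i\<in>F. exp (- c * l1norm (idx_vec i))) \<le> (\<Sum>i\<in>PiE (UNIV::'d set) (\<lambda>_. {..N}). exp (- c * l1norm (idx_vec i)))"
    proof -
      have fP: "finite (PiE (UNIV::'d set) (\<lambda>_. {..N}))" by (intro finite_PiE) auto
      show ?thesis using sum_mono2[OF fP sub, of "\<lambda>i. exp (- c * l1norm (idx_vec i))"] by simp
    qed
    also have "\<dots> = (\<Sum>i\<in>PiE (UNIV::'d set) (\<lambda>_. {..N}). \<Prod>k\<in>UNIV. ?q ^ i k)"
      by (rule sum.cong[OF refl], rule exp_l1_prod)
    also have "\<dots> = (\<Prod>k\<in>(UNIV::'d set). \<Sum>n\<in>{..N}. ?q ^ n)" by (rule prod_sum_PiE[symmetric]) auto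
    also have "\<dots> \<le> (\<Prod>k\<in>(UNIV::'d set). 1 / (1 - ?q))"
    proof (rule prod_mono)
      fix k :: 'd
      have "(\<Sum>n\<in>{..N}. ?q ^ n) \<le> suminf (\<lambda>n. ?q ^ n)"
        using q by (intro sum_le_suminf summable_geometric) auto
      also have "\<dots> = 1 / (1 - ?q)" using q by (intro suminf_geometric) auto
      finally show "0 \<le> (\<Sum>n\<in>{..N}. ?q ^ n) \<and> (\<Sum>n\<in>{..N}. ?q ^ n) \<le> 1 / (1 - ?q)"
        using q by (auto intro: sum_nonneg)
    qed
    finally show "(\<Sum>i\<in>F. exp (- c * l1norm (idx_vec i))) \<le> (\<Prod>k\<in>(UNIV::'d set). 1 / (1 - ?q))" .
  qed
qed simp

definition onev :: "real^'d::finite" where "onev = (\<chi> k. 1)"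

lemma idx_onev: "idx_vec i \<bullet> onev = l1norm (idx_vec i)"
  by (simp add: onev_def inner_vec_def l1norm_idx idx_vec_comp)

lemma summable_shift:
  fixes f :: "('d::finite \<Rightarrow> nat) \<Rightarrow> real"
  assumes nonneg: "\<And>i. f i \<ge> 0" and th: "\<theta> \<in> Kset f" and eta: "\<eta> > 0"
  shows "(\<lambda>i. f i * exp (idx_vec i \<bullet> (\<theta> - \<eta> *\<^sub>R onev))) summable_on UNIV"
proof -
  obtain A where A: "A \<ge> 1" "\<And>i. f i * exp (idx_vec i \<bullet> \<theta>) \<le> A * exp ((\<eta>/2) * l1norm (idx_vec i))"
    using global_bound[OF nonneg th, of "\<eta>/2"] eta by auto
  have "(\<lambda>i::'d\<Rightarrow>nat. A * exp (- (\<eta>/2) * l1norm (idx_vec i))) summable_on UNIV"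
    using geo_summable[of "\<eta>/2"] eta by (intro summable_on_cmult_right) auto
  then show ?thesis
  proof (rule summable_on_comparison_test)
    fix i :: "'d \<Rightarrow> nat"
    have e: "exp (idx_vec i \<bullet> (\<theta> - \<eta> *\<^sub>R onev)) = exp (idx_vec i \<bullet> \<theta>) * exp (- \<eta> * l1norm (idx_vec i))"
      by (simp add: inner_diff_right idx_onev exp_diff exp_minus field_simps)
    have "f i * exp (idx_vec i \<bullet> (\<theta> - \<eta> *\<^sub>R onev)) = (f i * exp (idx_vec i \<bullet> \<theta>)) * exp (- \<eta> * l1norm (idx_vec i))"
      unfolding e by simp
    also have "\<dots> \<le> (A * exp ((\<eta>/2) * l1norm (idx_vec i))) * exp (- \<eta> * l1norm (idx_vec i))"
      using A(2)[of i] by (intro mult_right_mono) auto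
    also have "\<dots> = A * exp (- (\<eta>/2) * l1norm (idx_vec i))"
      by (simp add: mult.assoc exp_add[symmetric] algebra_simps)
    finally show "f i * exp (idx_vec i \<bullet> (\<theta> - \<eta> *\<^sub>R onev)) \<le> A * exp (- (\<eta>/2) * l1norm (idx_vec i))" .
    show "0 \<le> f i * exp (idx_vec i \<bullet> (\<theta> - \<eta> *\<^sub>R onev))" using nonneg[of i] by simp
  qed
qed




lemma exp_inner_prod: "exp (idx_vec i \<bullet> v) = (\<Prod>k\<in>UNIV. exp (v$k) ^ i k)"
proof -
  have "exp (idx_vec i \<bullet> v) = exp (\<Sum>k\<in>UNIV. real (i k) * v$k)" by (simp add: inner_vec_def idx_vec_comp)
  also have "\<dots> = (\<Prod>k\<in>UNIV. exp (real (i k) * v$k))" by (simp add: exp_sum)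
  also have "\<dots> = (\<Prod>k\<in>UNIV. exp (v$k) ^ i k)" by (rule prod.cong[OF refl]) (simp only: exp_of_nat_mult)
  finally show ?thesis .
qed

lemma omega_mem:
  fixes f :: "('d::finite \<Rightarrow> nat) \<Rightarrow> real"
  assumes nonneg: "\<And>i. f i \<ge> 0" and th: "\<theta> \<in> Kset f" and eps: "\<epsilon> > 0"
  shows "\<theta> - \<epsilon> *\<^sub>R onev \<in> Omega f"
proof -
  define z :: "complex^'d" where "z = (\<chi> k. complex_of_real (exp (\<theta>$k - \<epsilon>)))"
  have z0: "\<forall>k. z$k \<noteq> 0" unfolding z_def by simp
  have Rz: "Relog z = \<theta> - \<epsilon> *\<^sub>R onev" unfolding Relog_def z_def onev_def by (simp add: vec_eq_iff)
  define e where "e = Min (range (\<lambda>k. exp (\<theta>$k - \<epsilon>/2) - exp (\<theta>$k - \<epsilon>)))"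
  have e: "e > 0" unfolding e_def using eps by (subst Min_gr_iff) auto
  have ek: "e \<le> exp (\<theta>$k - \<epsilon>/2) - exp (\<theta>$k - \<epsilon>)" for k unfolding e_def by (rule Min_le) auto
  have "ball z e \<subseteq> abs_conv_domain f"
  proof
    fix w assume "w \<in> ball z e"
    then have dw: "norm (w - z) < e" by (simp add: dist_norm norm_minus_commute)
    have wk: "norm (w$k) \<le> exp (\<theta>$k - \<epsilon>/2)" for k
    proof -
      have "norm (w$k) \<le> norm (z$k) + norm (w$k - z$k)" by (metis norm_triangle_sub add.commute)
      also have "norm (w$k - z$k) \<le> norm (w - z)"
        using Finite_Cartesian_Product.norm_nth_le[of "w - z" k] by simp
      also have "norm (z$k) = exp (\<theta>$k - \<epsilon>)" unfolding z_def by simp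
      finally show ?thesis using dw ek[of k] by linarith
    qed
    have sm: "(\<lambda>i. f i * exp (idx_vec i \<bullet> (\<theta> - (\<epsilon>/2) *\<^sub>R onev))) summable_on UNIV"
      using summable_shift[OF nonneg th, of "\<epsilon>/2"] eps by simp
    have "(\<lambda>i. f i * (\<Prod>k\<in>UNIV. norm (w $ k) ^ i k)) summable_on UNIV"
    proof (rule summable_on_comparison_test[OF sm])
      fix i :: "'d \<Rightarrow> nat"
      have "(\<Prod>k\<in>UNIV. norm (w $ k) ^ i k) \<le> (\<Prod>k\<in>UNIV. exp ((\<theta> - (\<epsilon>/2) *\<^sub>R onev)$k) ^ i k)"
        using wk by (intro prod_mono) (auto intro: power_mono simp: onev_def)
      also have "\<dots> = exp (idx_vec i \<bullet> (\<theta> - (\<epsilon>/2) *\<^sub>R onev))" by (rule exp_inner_prod[symmetric])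
      finally show "f i * (\<Prod>k\<in>UNIV. norm (w $ k) ^ i k) \<le> f i * exp (idx_vec i \<bullet> (\<theta> - (\<epsilon>/2) *\<^sub>R onev))"
        using nonneg[of i] by (intro mult_left_mono) auto
      show "0 \<le> f i * (\<Prod>k\<in>UNIV. norm (w $ k) ^ i k)" using nonneg[of i] by (simp add: prod_nonneg)
    qed
    then show "w \<in> abs_conv_domain f" unfolding abs_conv_domain_def by simp
  qed
  then have "z \<in> interior (abs_conv_domain f)" using e by (auto simp: mem_interior)
  then show ?thesis unfolding Omega_def using z0 Rz[symmetric] by blast
qed

lemma closure_Omega:
  fixes f :: "('d::finite \<Rightarrow> nat) \<Rightarrow> real"
  assumes nonneg: "\<And>i. f i \<ge> 0"
  shows "closure (Omega f) = Kset f"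
proof
  show "closure (Omega f) \<subseteq> Kset f"
    using Omega_sub_K[of f, OF nonneg] Kset_closed[of f] by (rule closure_minimal)
  show "Kset f \<subseteq> closure (Omega f)"
  proof
    fix \<theta> assume th: "\<theta> \<in> Kset f"
    show "\<theta> \<in> closure (Omega f)" unfolding closure_approachable
    proof (intro allI impI)
      fix e :: real assume e: "e > 0"
      define \<epsilon> where "\<epsilon> = e / (norm (onev::real^'d) + 1)"
      have ep: "\<epsilon> > 0" unfolding \<epsilon>_def using e by (simp add: add_nonneg_pos)
      have "dist (\<theta> - \<epsilon> *\<^sub>R onev) \<theta> = \<epsilon> * norm (onev::real^'d)" using ep by (simp add: dist_norm)
      also have "\<dots> < e"
      proof -
        have "norm (onev::real^'d) / (norm (onev::real^'d) + 1) < 1"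
          by (subst divide_less_eq) (auto simp: add_nonneg_pos)
        then have "e * (norm (onev::real^'d) / (norm (onev::real^'d) + 1)) < e * 1" using e by (intro mult_strict_left_mono)
        moreover have "\<epsilon> * norm (onev::real^'d) = e * (norm (onev::real^'d) / (norm (onev::real^'d) + 1))"
          unfolding \<epsilon>_def by simp
        ultimately show ?thesis by simp
      qed
      finally show "\<exists>y\<in>Omega f. dist y \<theta> < e" using omega_mem[OF nonneg th ep] by blast
    qed
  qed
qed




lemma hypo_mem: "(y, s) \<in> hypo f \<longleftrightarrow> ereal s \<le> psi f y"
  unfolding hypo_def by simp

lemma hypo_convex:
  fixes f :: "('d::finite \<Rightarrow> nat) \<Rightarrow> real"
  assumes nonneg: "\<And>i. f i \<ge> 0"
    and CG: "\<exists>a>0. \<exists>b>0. \<exists>c>0. \<forall>x y :: real^'d.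
               nu_ball f (x + y) a \<ge> c * nu_ball f x b * nu_ball f y b"
    and tau_fin: "(SUP x\<in>{x :: real^'d. l1norm x = 1}. psi f x) < \<infinity>"
  shows "convex (hypo f)"
  unfolding convex_def
proof (intro ballI allI impI)
  fix p q :: "(real^'d) \<times> real" and u v :: real
  assume p: "p \<in> hypo f" and q: "q \<in> hypo f" and u: "u \<ge> 0" and v: "v \<ge> 0" and uv: "u + v = 1"
  obtain y1 s1 where p': "p = (y1, s1)" by (cases p)
  obtain y2 s2 where q': "q = (y2, s2)" by (cases q)
  have h1: "ereal s1 \<le> psi f y1" and h2: "ereal s2 \<le> psi f y2" using p q p' q' hypo_mem by auto
  show "u *\<^sub>R p + v *\<^sub>R q \<in> hypo f"
  proof (cases "u = 0 \<or> v = 0")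
    case True
    then show ?thesis using uv p q by auto
  next
    case False
    then have up: "u > 0" and vp: "v > 0" using u v by auto
    have a1: "ereal (u * s1) \<le> psi f (u *\<^sub>R y1)"
    proof -
      have "ereal u * ereal s1 \<le> ereal u * psi f y1" using h1 up by (intro ereal_mult_left_mono) auto
      then show ?thesis using psi_homog[OF up, of f y1] by simp
    qed
    have a2: "ereal (v * s2) \<le> psi f (v *\<^sub>R y2)"
    proof -
      have "ereal v * ereal s2 \<le> ereal v * psi f y2" using h2 vp by (intro ereal_mult_left_mono) auto
      then show ?thesis using psi_homog[OF vp, of f y2] by simp
    qed
    have "ereal (u * s1 + v * s2) = ereal (u * s1) + ereal (v * s2)" by simp
    also have "\<dots> \<le> psi f (u *\<^sub>R y1) + psi f (v *\<^sub>R y2)" using a1 a2 by (rule add_mono)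
    also have "\<dots> \<le> psi f (u *\<^sub>R y1 + v *\<^sub>R y2)" by (rule psi_superadd[OF nonneg CG tau_fin])
    finally show ?thesis unfolding p' q' by (simp add: hypo_mem)
  qed
qed

lemma sep:
  fixes f :: "('d::finite \<Rightarrow> nat) \<Rightarrow> real"
  assumes nonneg: "\<And>i. f i \<ge> 0"
    and CG: "\<exists>a>0. \<exists>b>0. \<exists>c>0. \<forall>x y :: real^'d.
               nu_ball f (x + y) a \<ge> c * nu_ball f x b * nu_ball f y b"
    and tau_fin: "(SUP x\<in>{x :: real^'d. l1norm x = 1}. psi f x) < \<infinity>"
    and lt: "psi f x < ereal (- M')"
  shows "(\<exists>\<theta>\<in>Kset f. M' < x \<bullet> \<theta>) \<or> (\<exists>a1. a1 \<bullet> x < 0 \<and> (\<forall>y. psi f y \<noteq> -\<infinity> \<longrightarrow> a1 \<bullet> y \<ge> 0))"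
proof -
  obtain B where B: "\<And>x. psi f x \<le> ereal (B * l1norm x)" using psi_bound[OF tau_fin] by blast
  have fin: "psi f z \<noteq> \<infinity>" for z using B[of z] by auto
  have nz: "(x, - M') \<notin> hypo f" using lt by (simp add: hypo_mem not_le)
  obtain a b where ab: "inner a (x, - M') < b" "\<forall>p\<in>hypo f. b < inner a p"
    using separating_hyperplane_closed_point[OF hypo_convex[OF nonneg CG tau_fin] hypo_closed[OF tau_fin] nz] by blast
  obtain a1 \<beta> where a: "a = (a1, \<beta>)" by (cases a)
  have z0: "(0, 0) \<in> hypo f" by (simp add: hypo_mem psi_def)
  have b0: "b < 0" using ab(2) z0 a by force
  have H1: "inner a p \<ge> 0" if pH: "p \<in> hypo f" for p
  proof (rule ccontr)
    assume "\<not> inner a p \<ge> 0"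
    then have neg: "inner a p < 0" by simp
    define l where "l = b / inner a p"
    have l: "l > 0" unfolding l_def using neg b0 by (simp add: divide_neg_neg)
    obtain y s where p': "p = (y, s)" by (cases p)
    have "ereal s \<le> psi f y" using pH p' hypo_mem by auto
    then have "ereal l * ereal s \<le> ereal l * psi f y" using l by (intro ereal_mult_left_mono) auto
    then have "l *\<^sub>R p \<in> hypo f" using psi_homog[OF l, of f y] p' by (simp add: hypo_mem)
    then have "b < inner a (l *\<^sub>R p)" using ab(2) by blast
    also have "inner a (l *\<^sub>R p) = b" unfolding l_def using neg by simp
    finally show False by simp
  qed
  have "(0, -1) \<in> hypo f" by (simp add: hypo_mem psi_def)
  then have "inner a (0, -1) \<ge> 0" by (rule H1)
  then have beta: "\<beta> \<le> 0" using a by simp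
  have H3: "a1 \<bullet> x - \<beta> * M' < 0" using ab(1) b0 a by simp
  have Hy: "a1 \<bullet> y + \<beta> * s \<ge> 0" if "ereal s \<le> psi f y" for y s
    using H1[of "(y, s)"] that a by (simp add: hypo_mem)
  show ?thesis
  proof (cases "\<beta> < 0")
    case True
    define \<theta> where "\<theta> = (1 / \<beta>) *\<^sub>R a1"
    have "\<theta> \<in> Kset f" unfolding Kset_def
    proof (intro CollectI allI)
      fix y
      show "psi f y \<le> ereal (- (y \<bullet> \<theta>))"
      proof (cases "psi f y")
        case (real s)
        have "a1 \<bullet> y + \<beta> * s \<ge> 0" using Hy[of s y] real by simp
        then have "s \<le> - ((a1 \<bullet> y) / \<beta>)" using True by (simp add: field_simps)
        moreover have "y \<bullet> \<theta> = (a1 \<bullet> y) / \<beta>" unfolding \<theta>_def by (simp add: inner_commute)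
        ultimately show ?thesis using real by simp
      qed (use fin in auto)
    qed
    moreover have "M' < x \<bullet> \<theta>"
    proof -
      have "a1 \<bullet> x < \<beta> * M'" using H3 by simp
      then have "M' < (a1 \<bullet> x) / \<beta>" using True by (simp add: field_simps)
      then show ?thesis unfolding \<theta>_def by (simp add: inner_commute)
    qed
    ultimately show ?thesis by blast
  next
    case False
    then have b0': "\<beta> = 0" using beta by simp
    have "a1 \<bullet> x < 0" using H3 b0' by simp
    moreover have "a1 \<bullet> y \<ge> 0" if yn: "psi f y \<noteq> -\<infinity>" for y
    proof -
      obtain s where "psi f y = ereal s" using yn fin[of y] by (cases "psi f y") auto
      then show ?thesis using Hy[of s y] b0' by simp
    qed
    ultimately show ?thesis by blast
  qed
qed




lemma K_nonempty:
  fixes f :: "('d::finite \<Rightarrow> nat) \<Rightarrow> real"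
  assumes nonneg: "\<And>i. f i \<ge> 0"
    and CG: "\<exists>a>0. \<exists>b>0. \<exists>c>0. \<forall>x y :: real^'d.
               nu_ball f (x + y) a \<ge> c * nu_ball f x b * nu_ball f y b"
    and tau_fin: "(SUP x\<in>{x :: real^'d. l1norm x = 1}. psi f x) < \<infinity>"
  shows "\<exists>\<theta>0. \<theta>0 \<in> Kset f"
proof -
  have "psi f (0::real^'d) < ereal (- (-1))" by (simp add: psi_def)
  from sep[OF nonneg CG tau_fin this] show ?thesis by auto
qed

lemma support:
  fixes f :: "('d::finite \<Rightarrow> nat) \<Rightarrow> real"
  assumes nonneg: "\<And>i. f i \<ge> 0"
    and CG: "\<exists>a>0. \<exists>b>0. \<exists>c>0. \<forall>x y :: real^'d.
               nu_ball f (x + y) a \<ge> c * nu_ball f x b * nu_ball f y b"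
    and tau_fin: "(SUP x\<in>{x :: real^'d. l1norm x = 1}. psi f x) < \<infinity>"
  shows "- psi f x = (SUP \<theta>\<in>Kset f. ereal (x \<bullet> \<theta>))"
proof (rule antisym)
  show "(SUP \<theta>\<in>Kset f. ereal (x \<bullet> \<theta>)) \<le> - psi f x"
  proof (rule SUP_least)
    fix \<theta> assume "\<theta> \<in> Kset f"
    then have "psi f x \<le> ereal (- (x \<bullet> \<theta>))" unfolding Kset_def by auto
    then show "ereal (x \<bullet> \<theta>) \<le> - psi f x" by (cases "psi f x") auto
  qed
  show "- psi f x \<le> (SUP \<theta>\<in>Kset f. ereal (x \<bullet> \<theta>))"
  proof (rule ccontr)
    let ?S = "SUP \<theta>\<in>Kset f. ereal (x \<bullet> \<theta>)"
    assume "\<not> ?thesis"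
    then have "?S < - psi f x" by simp
    then obtain M' where M': "?S < ereal M'" "ereal M' < - psi f x" using ereal_dense2 by blast
    have lt: "psi f x < ereal (- M')" using M'(2) by (cases "psi f x") auto
    have noth: "\<not> (M' < x \<bullet> \<theta>)" if "\<theta> \<in> Kset f" for \<theta>
    proof
      assume "M' < x \<bullet> \<theta>"
      moreover have "ereal (x \<bullet> \<theta>) \<le> ?S" using that by (rule SUP_upper)
      ultimately have "ereal (x \<bullet> \<theta>) < ereal M'" using M'(1) by (meson le_less_trans)
      then show False using \<open>M' < x \<bullet> \<theta>\<close> by simp
    qed
    show False
    proof (cases "\<exists>\<theta>\<in>Kset f. M' < x \<bullet> \<theta>")
      case True then show False using noth by blast
    next
      case False
      then obtain a1 where a1: "a1 \<bullet> x < 0" "\<And>y. psi f y \<noteq> -\<infinity> \<Longrightarrow> a1 \<bullet> y \<ge> 0"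
        using sep[OF nonneg CG tau_fin lt] by blast
      obtain \<theta>0 where th0: "\<theta>0 \<in> Kset f" using K_nonempty[OF nonneg CG tau_fin] by blast
      define t where "t = (\<bar>M'\<bar> + \<bar>x \<bullet> \<theta>0\<bar> + 1) / (- (a1 \<bullet> x))"
      have "\<bar>M'\<bar> + \<bar>x \<bullet> \<theta>0\<bar> + 1 > 0" by (simp add: add_pos_nonneg)
      then have t: "t > 0" unfolding t_def using a1(1) by (intro divide_pos_pos) auto
      define \<theta> where "\<theta> = \<theta>0 - t *\<^sub>R a1"
      have "\<theta> \<in> Kset f" unfolding Kset_def
      proof (intro CollectI allI)
        fix y
        show "psi f y \<le> ereal (- (y \<bullet> \<theta>))"
        proof (cases "psi f y = -\<infinity>")
          case False
          then have "a1 \<bullet> y \<ge> 0" by (rule a1(2))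
          then have "t * (a1 \<bullet> y) \<ge> 0" using t by simp
          then have "y \<bullet> \<theta> \<le> y \<bullet> \<theta>0" unfolding \<theta>_def by (simp add: inner_diff_right inner_commute)
          moreover have "psi f y \<le> ereal (- (y \<bullet> \<theta>0))" using th0 unfolding Kset_def by auto
          ultimately show ?thesis by (meson ereal_less_eq(3) neg_le_iff_le order_trans)
        qed simp
      qed
      moreover have "M' < x \<bullet> \<theta>"
      proof -
        have "t * (a1 \<bullet> x) = - (\<bar>M'\<bar> + \<bar>x \<bullet> \<theta>0\<bar> + 1)" unfolding t_def using a1(1) by simp
        then have "x \<bullet> \<theta> = x \<bullet> \<theta>0 + (\<bar>M'\<bar> + \<bar>x \<bullet> \<theta>0\<bar> + 1)" unfolding \<theta>_def
          by (simp add: inner_diff_right inner_commute)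
        then show ?thesis by linarith
      qed
      ultimately show False using noth by blast
    qed
  qed
qed

lemma psi_dom_nonneg:
  fixes f :: "('d::finite \<Rightarrow> nat) \<Rightarrow> real"
  assumes nonneg: "\<And>i. f i \<ge> 0" and ne: "psi f y \<noteq> -\<infinity>"
  shows "y $ k \<ge> 0"
proof (cases "y = 0")
  case True then show ?thesis by simp
next
  case False
  obtain \<alpha> where "ereal \<alpha> < psi f y"
  proof (cases "psi f y")
    case (real r) then show ?thesis using that[of "r-1"] by simp
  next
    case PInf then show ?thesis using that[of 0] by simp
  qed (use ne in simp)
  then have "good f y \<alpha>" by (rule psi_good[OF nonneg False])
  then show ?thesis by (rule good_nonneg)
qed

lemma K_down:
  fixes f :: "('d::finite \<Rightarrow> nat) \<Rightarrow> real"
  assumes nonneg: "\<And>i. f i \<ge> 0" and th: "\<theta> \<in> Kset f" and le: "\<And>k. \<theta>' $ k \<le> \<theta> $ k"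
  shows "\<theta>' \<in> Kset f"
  unfolding Kset_def
proof (intro CollectI allI)
  fix y
  show "psi f y \<le> ereal (- (y \<bullet> \<theta>'))"
  proof (cases "psi f y = -\<infinity>")
    case False
    then have yk: "y $ k \<ge> 0" for k by (rule psi_dom_nonneg[OF nonneg])
    have "y \<bullet> \<theta>' \<le> y \<bullet> \<theta>" unfolding inner_vec_def
      using yk le by (intro sum_mono) (simp add: mult_left_mono)
    moreover have "psi f y \<le> ereal (- (y \<bullet> \<theta>))" using th unfolding Kset_def by auto
    ultimately show ?thesis by (meson ereal_less_eq(3) neg_le_iff_le order_trans)
  qed simp
qed

lemma boundary_point:
  fixes f :: "('d::finite \<Rightarrow> nat) \<Rightarrow> real"
  assumes nonneg: "\<And>i. f i \<ge> 0" and notU: "Kset f \<noteq> UNIV" and th: "\<theta> \<in> Kset f" and x: "\<And>k. x $ k \<ge> 0"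
  shows "\<exists>\<theta>'\<in>frontier (Kset f). x \<bullet> \<theta> \<le> x \<bullet> \<theta>'"
proof -
  obtain \<omega> where om: "\<omega> \<notin> Kset f" using notU by blast
  define T where "T = {t. 0 \<le> t \<and> \<theta> + t *\<^sub>R onev \<in> Kset f}"
  define tm where "tm = (\<Sum>k\<in>UNIV. \<bar>\<omega>$k - \<theta>$k\<bar>)"
  have bdd: "t \<le> tm" if "t \<in> T" for t
  proof (rule ccontr)
    assume "\<not> t \<le> tm"
    then have "\<omega> $ k \<le> (\<theta> + t *\<^sub>R onev) $ k" for k
    proof -
      have "\<bar>\<omega>$k - \<theta>$k\<bar> \<le> tm" unfolding tm_def by (rule member_le_sum) auto
      then show ?thesis using \<open>\<not> t \<le> tm\<close> by (simp add: onev_def)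
    qed
    then have "\<omega> \<in> Kset f" using K_down[of f "\<theta> + t *\<^sub>R onev" \<omega>, OF nonneg] that unfolding T_def by auto
    then show False using om by simp
  qed
  have T0: "0 \<in> T" unfolding T_def using th by simp
  have Tb: "bdd_above T" using bdd by (auto simp: bdd_above_def)
  have Tc: "closed T"
  proof -
    have "T = {t. 0 \<le> t} \<inter> (\<lambda>t. \<theta> + t *\<^sub>R onev) -` Kset f" unfolding T_def by auto
    moreover have "closed ((\<lambda>t. \<theta> + t *\<^sub>R onev) -` Kset f)"
      by (rule continuous_closed_vimage[OF Kset_closed]) (auto intro!: continuous_intros)
    moreover have "closed {t::real. 0 \<le> t}" by (rule closed_Collect_le) (auto intro: continuous_intros)
    ultimately show ?thesis by auto
  qed
  define ts where "ts = Sup T"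
  have tsT: "ts \<in> T" unfolding ts_def using closed_contains_Sup[of T] T0 Tb Tc by auto
  define \<theta>s where "\<theta>s = \<theta> + ts *\<^sub>R onev"
  have thK: "\<theta>s \<in> Kset f" and ts0: "ts \<ge> 0" using tsT unfolding T_def \<theta>s_def by auto
  have "\<theta>s \<notin> interior (Kset f)"
  proof
    assume "\<theta>s \<in> interior (Kset f)"
    then obtain e where e: "e > 0" "ball \<theta>s e \<subseteq> Kset f" by (auto simp: mem_interior)
    define s where "s = e / (norm (onev::real^'d) + 1)"
    have s: "s > 0" unfolding s_def using e by (simp add: add_nonneg_pos)
    have "dist \<theta>s (\<theta>s + s *\<^sub>R onev) = s * norm (onev::real^'d)" using s by (simp add: dist_norm)
    also have "\<dots> < e"
    proof -
      have "norm (onev::real^'d) / (norm (onev::real^'d) + 1) < 1"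
        by (subst divide_less_eq) (auto simp: add_nonneg_pos)
      then have "e * (norm (onev::real^'d) / (norm (onev::real^'d) + 1)) < e * 1" using e by (intro mult_strict_left_mono)
      moreover have "s * norm (onev::real^'d) = e * (norm (onev::real^'d) / (norm (onev::real^'d) + 1))"
        unfolding s_def by simp
      ultimately show ?thesis by simp
    qed
    finally have "\<theta>s + s *\<^sub>R onev \<in> Kset f" using e by auto
    then have "ts + s \<in> T" unfolding T_def \<theta>s_def using ts0 s by (simp add: algebra_simps)
    then have "ts + s \<le> ts" unfolding ts_def using Tb by (rule cSup_upper)
    then show False using s by simp
  qed
  then have "\<theta>s \<in> frontier (Kset f)" using thK Kset_closed[of f] by (simp add: frontier_def)
  moreover have "x \<bullet> \<theta> \<le> x \<bullet> \<theta>s"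
  proof -
    have "x \<bullet> onev \<ge> 0" unfolding inner_vec_def onev_def using x by (simp add: sum_nonneg)
    then show ?thesis unfolding \<theta>s_def using ts0 by (simp add: inner_add_right)
  qed
  ultimately show ?thesis by blast
qed




lemma K_notU:
  fixes f :: "('d::finite \<Rightarrow> nat) \<Rightarrow> real"
  assumes nonneg: "\<And>i. f i \<ge> 0" and om: "Omega f \<noteq> UNIV"
  shows "Kset f \<noteq> UNIV"
proof
  assume KU: "Kset f = UNIV"
  have "\<omega> \<in> Omega f" for \<omega> :: "real^'d"
  proof -
    have "\<omega> + onev \<in> Kset f" using KU by simp
    then have "(\<omega> + onev) - 1 *\<^sub>R onev \<in> Omega f" by (rule omega_mem[OF nonneg]) simp
    then show ?thesis by simp
  qed
  then show False using om by auto
qed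

theorem theorem2:
  fixes f :: "('d::finite \<Rightarrow> nat) \<Rightarrow> real"
  assumes nonneg: "\<And>i. f i \<ge> 0"
    and interior_ne: "interior (abs_conv_domain f) \<noteq> {}"
    and CG: "\<exists>a>0. \<exists>b>0. \<exists>c>0. \<forall>x y :: real^'d.
               nu_ball f (x + y) a \<ge> c * nu_ball f x b * nu_ball f y b"
    and tau_fin: "(SUP x\<in>{x :: real^'d. l1norm x = 1}. psi f x) < \<infinity>"
  shows "(\<forall>x :: real^'d. - psi f x = (SUP \<theta>\<in>closure (Omega f). ereal (x \<bullet> \<theta>)))
       \<and> (\<forall>x :: real^'d. (\<forall>k. x $ k \<ge> 0) \<longrightarrow>
            psi f x = (INF \<theta>\<in>uminus ` closure (Omega f). ereal (x \<bullet> \<theta>)))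
       \<and> (Omega f \<noteq> UNIV \<longrightarrow> (\<forall>x :: real^'d. (\<forall>k. x $ k \<ge> 0) \<longrightarrow>
            psi f x = (INF \<theta>\<in>uminus ` frontier (closure (Omega f)). ereal (x \<bullet> \<theta>))))"
proof -
  have Kc: "closure (Omega f) = Kset f" by (rule closure_Omega[OF nonneg])
  have P1: "- psi f x = (SUP \<theta>\<in>Kset f. ereal (x \<bullet> \<theta>))" for x :: "real^'d"
    by (rule support[OF nonneg CG tau_fin])
  have inf_eq: "(INF \<theta>\<in>uminus ` S. ereal (x \<bullet> \<theta>)) = - (SUP \<theta>\<in>S. ereal (x \<bullet> \<theta>))" for S and x :: "real^'d"
  proof -
    have "(INF \<theta>\<in>uminus ` S. ereal (x \<bullet> \<theta>)) = (INF \<theta>\<in>S. - ereal (x \<bullet> \<theta>))"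
      by (simp add: image_comp o_def)
    also have "\<dots> = - (SUP \<theta>\<in>S. ereal (x \<bullet> \<theta>))" by (rule ereal_INF_uminus_eq)
    finally show ?thesis .
  qed
  have P2: "psi f x = (INF \<theta>\<in>uminus ` Kset f. ereal (x \<bullet> \<theta>))" for x :: "real^'d"
    unfolding inf_eq P1[symmetric] by simp
  have P3: "psi f x = (INF \<theta>\<in>uminus ` frontier (Kset f). ereal (x \<bullet> \<theta>))"
    if om: "Omega f \<noteq> UNIV" and x: "\<forall>k. x $ k \<ge> 0" for x :: "real^'d"
  proof -
    have notU: "Kset f \<noteq> UNIV" by (rule K_notU[OF nonneg om])
    have "(SUP \<theta>\<in>frontier (Kset f). ereal (x \<bullet> \<theta>)) = (SUP \<theta>\<in>Kset f. ereal (x \<bullet> \<theta>))"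
    proof (rule antisym)
      show "(SUP \<theta>\<in>frontier (Kset f). ereal (x \<bullet> \<theta>)) \<le> (SUP \<theta>\<in>Kset f. ereal (x \<bullet> \<theta>))"
        using frontier_subset_closed[OF Kset_closed[of f]] by (intro SUP_subset_mono) auto
      show "(SUP \<theta>\<in>Kset f. ereal (x \<bullet> \<theta>)) \<le> (SUP \<theta>\<in>frontier (Kset f). ereal (x \<bullet> \<theta>))"
      proof (rule SUP_mono)
        fix \<theta> assume "\<theta> \<in> Kset f"
        then obtain \<theta>' where "\<theta>' \<in> frontier (Kset f)" "x \<bullet> \<theta> \<le> x \<bullet> \<theta>'"
          using boundary_point[OF nonneg notU _ ] x by blast
        then show "\<exists>m\<in>frontier (Kset f). ereal (x \<bullet> \<theta>) \<le> ereal (x \<bullet> m)" by auto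
      qed
    qed
    then show ?thesis unfolding inf_eq P1[symmetric] by simp
  qed
  show ?thesis unfolding Kc using P1 P2 P3 by auto
qed


end
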